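(* Let $q$ be a query over ordered databases that is computable in (first-order uniform) $\mathrm{AC}^1$, and let $\Delta$ be a finite set of parameter-free first-order replacement queries. Then $(q,\Delta)$ is in DynFO with suitable initialization.
   Context: Framework. A schema $\tau$ consists of relation symbols with arities and constant symbols; a database over $\tau$ with a finite domain $D$ interprets them. A replacement rule for a relation symbol $R$ is $R := \mu_R(\bar p;\bar x)$, where $\mu_R$ is a first-order formula over $\tau$, $\bar x$ has the arity of $R$, and $\bar p$ is a tuple of parameter variables. A replacement query $\rho(\bar p)$ is a set of replacement rules for distinct relation symbols, all with the same parameter tuple $\bar p$; it is parameter-free if $\bar p$ is empty. A change $\delta=\rho(\bar a)$ consists of a replacement query $\rho$ and a tuple $\bar a$ of domain elements of the arity of $\bar p$; $\delta(\mathcal D)$ is obtained from $\mathcal D$ by replacing every relation $R$ having a rule in $\rho$ by $\{\bar b : \mathcal D\models \mu_R(\bar a;\bar b)\}$. A dynamic program with input schema $\tau_{in}$ and auxiliary schema $\tau_{aux}$ operates on states $(D,\mathcal I,\mathcal A)$ consisting of an input database $\mathcal I$ and an auxiliary database $\mathcal A$ over a common fixed finite domain $D$. For every allowed replacement query $\rho(\bar p)$ and every auxiliary symbol $T$ it has an update formula $\varphi_T(\bar p;\bar x)$ over $\tau_{in}\cup\tau_{aux}$. On a change $\delta=\rho(\bar a)$ the new state has input $\delta(\mathcal I)$ and each $T$ becomes $\{\bar b : (\mathcal I,\mathcal A)\models\varphi_T(\bar a,\bar b)\}$, evaluated in the old state. A dynamic query is a pair $(q,\Delta)$. A program maintains $(q,\Delta)$,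 $q$ of arity $k$, if it has a $k$-ary auxiliary relation $Q$ such that for every domain, starting from the initial (empty) input database, after every nonempty sequence $\alpha$ of changes from $\Delta$ the relation $Q$ equals $q$ of the current input database. DynFO is the class of dynamic queries maintainable with first-order update formulas. "With suitable initialization" means that the initial auxiliary database need not be empty but may be chosen as a suitable auxiliary database depending on the initial input (all initializations used are computable in polynomial time). An ordered database contains a built-in linear order $\le$ on its domain which is never modified by changes. $\mathrm{AC}^1$ is the class of problems decided by first-order uniform families of circuits of polynomial size and depth $O(\log n)$ with unbounded fan-in AND, OR and NOT gates. *)

theory Defs
  imports Complex_Main
begin

text \<open>An ordered database with n elements has domain {0..<n}; its built-in linear
order is the order of the naturals.
BIT is only permitted in the uniformity formulas of circuit families.\<close>

datatype trm = V nat | C nat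

datatype 'r fo =
    FRel 'r "trm list"
  | FEq trm trm
  | FLe trm trm
  | FBit trm trm
  | FNot "'r fo"
  | FAnd "'r fo" "'r fo"
  | FEx nat "'r fo"

fun teval :: "(nat \<Rightarrow> nat) \<Rightarrow> (nat \<Rightarrow> nat) \<Rightarrow> trm \<Rightarrow> nat" where
  "teval c \<sigma> (V i) = \<sigma> i"
| "teval c \<sigma> (C k) = c k"

fun sat :: "nat \<Rightarrow> ('r \<Rightarrow> nat list set) \<Rightarrow> (nat \<Rightarrow> nat) \<Rightarrow> (nat \<Rightarrow> nat) \<Rightarrow> 'r fo \<Rightarrow> bool" where
  "sat n I c \<sigma> (FRel R ts) = (map (teval c \<sigma>) ts \<in> I R)"
| "sat n I c \<sigma> (FEq t1 t2) = (teval c \<sigma> t1 = teval c \<sigma> t2)"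
| "sat n I c \<sigma> (FLe t1 t2) = (teval c \<sigma> t1 \<le> teval c \<sigma> t2)"
| "sat n I c \<sigma> (FBit t1 t2) = bit (teval c \<sigma> t1) (teval c \<sigma> t2)"
| "sat n I c \<sigma> (FNot \<phi>) = (\<not> sat n I c \<sigma> \<phi>)"
| "sat n I c \<sigma> (FAnd \<phi> \<psi>) = (sat n I c \<sigma> \<phi> \<and> sat n I c \<sigma> \<psi>)"
| "sat n I c \<sigma> (FEx x \<phi>) = (\<exists>a<n. sat n I c (\<sigma>(x := a)) \<phi>)"

fun tvars :: "trm \<Rightarrow> nat set" where
  "tvars (V i) = {i}"
| "tvars (C k) = {}"

fun fvs :: "'r fo \<Rightarrow> nat set" where
  "fvs (FRel R ts) = (\<Union>t\<in>set ts. tvars t)"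
| "fvs (FEq t1 t2) = tvars t1 \<union> tvars t2"
| "fvs (FLe t1 t2) = tvars t1 \<union> tvars t2"
| "fvs (FBit t1 t2) = tvars t1 \<union> tvars t2"
| "fvs (FNot \<phi>) = fvs \<phi>"
| "fvs (FAnd \<phi> \<psi>) = fvs \<phi> \<union> fvs \<psi>"
| "fvs (FEx x \<phi>) = fvs \<phi> - {x}"

fun trm_ok :: "nat set \<Rightarrow> trm \<Rightarrow> bool" where
  "trm_ok cs (V i) = True"
| "trm_ok cs (C k) = (k \<in> cs)"

fun fo_wf :: "('r \<rightharpoonup> nat) \<Rightarrow> nat set \<Rightarrow> bool \<Rightarrow> 'r fo \<Rightarrow> bool" where
  "fo_wf ar cs b (FRel R ts) = (ar R = Some (length ts) \<and> (\<forall>t\<in>set ts. trm_ok cs t))"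
| "fo_wf ar cs b (FEq t1 t2) = (trm_ok cs t1 \<and> trm_ok cs t2)"
| "fo_wf ar cs b (FLe t1 t2) = (trm_ok cs t1 \<and> trm_ok cs t2)"
| "fo_wf ar cs b (FBit t1 t2) = (b \<and> trm_ok cs t1 \<and> trm_ok cs t2)"
| "fo_wf ar cs b (FNot \<phi>) = fo_wf ar cs b \<phi>"
| "fo_wf ar cs b (FAnd \<phi> \<psi>) = (fo_wf ar cs b \<phi> \<and> fo_wf ar cs b \<psi>)"
| "fo_wf ar cs b (FEx x \<phi>) = fo_wf ar cs b \<phi>"

record schema =
  srel :: "nat \<rightharpoonup> nat"
  scst :: "nat set"

definition schema_ok :: "schema \<Rightarrow> bool" where
  "schema_ok S \<longleftrightarrow> finite (dom (srel S)) \<and> finite (scst S)"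

definition tuples :: "nat \<Rightarrow> nat \<Rightarrow> nat list set" where
  "tuples n r = {t. length t = r \<and> set t \<subseteq> {..<n}}"

definition is_db :: "schema \<Rightarrow> nat \<Rightarrow> (nat \<Rightarrow> nat list set) \<Rightarrow> (nat \<Rightarrow> nat) \<Rightarrow> bool" where
  "is_db S n I c \<longleftrightarrow>
     (\<forall>R. case srel S R of None \<Rightarrow> I R = {} | Some r \<Rightarrow> I R \<subseteq> tuples n r)
   \<and> (\<forall>k\<in>scst S. c k < n)"

text \<open>A replacement query with rpar parameters; the rule for R is a formula
\<mu>_R(p_0..p_{l-1}; x_0..x_{r-1}) whose variables are numbered: parameters are
variables 0..<l and the tuple variables are l..<l+r.\<close>
record rq =
  rpar :: nat
  rrules :: "nat \<rightharpoonup> nat fo"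

definition rq_ok :: "schema \<Rightarrow> rq \<Rightarrow> bool" where
  "rq_ok S \<rho> \<longleftrightarrow> (\<forall>R \<mu>. rrules \<rho> R = Some \<mu> \<longrightarrow>
      (\<exists>r. srel S R = Some r \<and> fo_wf (srel S) (scst S) False \<mu> \<and> fvs \<mu> \<subseteq> {..< rpar \<rho> + r}))"

definition apply_rq :: "schema \<Rightarrow> nat \<Rightarrow> (nat \<Rightarrow> nat list set) \<Rightarrow> (nat \<Rightarrow> nat)
    \<Rightarrow> rq \<Rightarrow> nat list \<Rightarrow> (nat \<Rightarrow> nat list set)" where
  "apply_rq S n I c \<rho> a = (\<lambda>R. case rrules \<rho> R of
      None \<Rightarrow> I R
    | Some \<mu> \<Rightarrow> {b \<in> tuples n (the (srel S R)). sat n I c (\<lambda>i. (a @ b) ! i) \<mu>})"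

text \<open>Auxiliary relation symbols are naturals; formulas of the program use
relation symbols Inl R (input) and Inr T (auxiliary).\<close>
record dynprog =
  auxar :: "nat \<rightharpoonup> nat"
  upd :: "rq \<Rightarrow> nat \<Rightarrow> (nat + nat) fo"
  qsym :: nat

definition prog_ok :: "schema \<Rightarrow> nat \<Rightarrow> rq set \<Rightarrow> dynprog \<Rightarrow> bool" where
  "prog_ok S k \<Delta> P \<longleftrightarrow> finite (dom (auxar P)) \<and> auxar P (qsym P) = Some k \<and>
     (\<forall>\<rho>\<in>\<Delta>. \<forall>T r. auxar P T = Some r \<longrightarrow>
        fo_wf (case_sum (srel S) (auxar P)) (scst S) False (upd P \<rho> T)
      \<and> fvs (upd P \<rho> T) \<subseteq> {..< rpar \<rho> + r})"

definition step :: "schema \<Rightarrow> dynprog \<Rightarrow> nat \<Rightarrow> (nat \<Rightarrow> nat) \<Rightarrow> rq \<times> nat list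
    \<Rightarrow> (nat \<Rightarrow> nat list set) \<times> (nat \<Rightarrow> nat list set)
    \<Rightarrow> (nat \<Rightarrow> nat list set) \<times> (nat \<Rightarrow> nat list set)" where
  "step S P n c ch st = (case ch of (\<rho>, a) \<Rightarrow> case st of (I, A) \<Rightarrow>
     (apply_rq S n I c \<rho> a,
      \<lambda>T. case auxar P T of None \<Rightarrow> {}
        | Some r \<Rightarrow> {b \<in> tuples n r. sat n (case_sum I A) c (\<lambda>i. (a @ b) ! i) (upd P \<rho> T)}))"

text \<open>(q,\<Delta>) is in DynFO with suitable initialization: a first-order dynamic program
and an initialization (an auxiliary database depending on the initial, empty
input database, i.e. on n and the constants) such that after every nonempty
change sequence the designated relation equals the query result.\<close>
definition dynfo_init :: "schema \<Rightarrow> nat \<Rightarrow> (nat \<Rightarrow> (nat \<Rightarrow> nat list set) \<Rightarrow> (nat \<Rightarrow> nat) \<Rightarrow> nat list set)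
    \<Rightarrow> rq set \<Rightarrow> bool" where
  "dynfo_init S k q \<Delta> \<longleftrightarrow> (\<exists>P init. prog_ok S k \<Delta> P \<and>
     (\<forall>n>0. \<forall>c. (\<forall>j\<in>scst S. c j < n) \<longrightarrow>
       (\<forall>\<alpha>. \<alpha> \<noteq> [] \<longrightarrow> (\<forall>(\<rho>, a)\<in>set \<alpha>. \<rho> \<in> \<Delta> \<and> a \<in> tuples n (rpar \<rho>)) \<longrightarrow>
          (let st = fold (step S P n c) \<alpha> ((\<lambda>_. {}), init n c)
           in snd st (qsym P) = q n (fst st) c))))"

text \<open>A circuit family is given by an FO-interpretation over the vocabulary {=, \<le>, BIT}
on the domain {0..<n}: gates are cw-tuples; formulas define AND, OR, NOT gates
(with this priority), the wire relation (parent in variables 0..<cw, child in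
variables cw..<2cw); all other gates are input gates, whose value is the disjunction
of the input bits R(first ar(R) components) for which cin_rel R holds and
"c = first component" for which cin_cst c holds. Output gate for the answer
tuple a is a @ [0,...,0].\<close>
record circ =
  cw :: nat
  cand :: "nat fo"
  cor :: "nat fo"
  cnot :: "nat fo"
  cedge :: "nat fo"
  cin_rel :: "nat \<Rightarrow> nat fo"
  cin_cst :: "nat \<Rightarrow> nat fo"
  cdep :: real

definition usat :: "nat \<Rightarrow> nat fo \<Rightarrow> nat list \<Rightarrow> bool" where
  "usat n \<phi> x = sat n (\<lambda>_. {}) (\<lambda>_. 0) (\<lambda>i. x ! i) \<phi>"

definition cedge_holds :: "circ \<Rightarrow> nat \<Rightarrow> nat list \<Rightarrow> nat list \<Rightarrow> bool" where
  "cedge_holds Cc n x y = usat n (cedge Cc) (x @ y)"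

definition inval :: "circ \<Rightarrow> schema \<Rightarrow> nat \<Rightarrow> (nat \<Rightarrow> nat list set) \<Rightarrow> (nat \<Rightarrow> nat) \<Rightarrow> nat list \<Rightarrow> bool" where
  "inval Cc S n I c x \<longleftrightarrow>
     (\<exists>R r. srel S R = Some r \<and> usat n (cin_rel Cc R) x \<and> take r x \<in> I R)
   \<or> (\<exists>k\<in>scst S. usat n (cin_cst Cc k) x \<and> hd x = c k)"

definition gstep :: "circ \<Rightarrow> schema \<Rightarrow> nat \<Rightarrow> (nat \<Rightarrow> nat list set) \<Rightarrow> (nat \<Rightarrow> nat)
    \<Rightarrow> (nat list \<Rightarrow> bool) \<Rightarrow> nat list \<Rightarrow> bool" where
  "gstep Cc S n I c prev x =
    (if usat n (cand Cc) x then (\<forall>y\<in>tuples n (cw Cc). cedge_holds Cc n x y \<longrightarrow> prev y)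
     else if usat n (cor Cc) x then (\<exists>y\<in>tuples n (cw Cc). cedge_holds Cc n x y \<and> prev y)
     else if usat n (cnot Cc) x then \<not> (\<exists>y\<in>tuples n (cw Cc). cedge_holds Cc n x y \<and> prev y)
     else inval Cc S n I c x)"

text \<open>Value of gate x evaluated to depth d (correct once d is at least the depth).\<close>
fun gval :: "circ \<Rightarrow> schema \<Rightarrow> nat \<Rightarrow> (nat \<Rightarrow> nat list set) \<Rightarrow> (nat \<Rightarrow> nat) \<Rightarrow> nat \<Rightarrow> nat list \<Rightarrow> bool" where
  "gval Cc S n I c 0 x = gstep Cc S n I c (\<lambda>_. False) x"
| "gval Cc S n I c (Suc d) x = gstep Cc S n I c (gval Cc S n I c d) x"

definition dbound :: "circ \<Rightarrow> nat \<Rightarrow> nat" where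
  "dbound Cc n = nat \<lceil>cdep Cc * (log 2 (real n) + 1)\<rceil>"

definition circ_ok :: "schema \<Rightarrow> nat \<Rightarrow> circ \<Rightarrow> bool" where
  "circ_ok S k Cc \<longleftrightarrow>
     1 \<le> cw Cc \<and> k \<le> cw Cc \<and> (\<forall>R r. srel S R = Some r \<longrightarrow> r \<le> cw Cc)
   \<and> (\<forall>\<phi>\<in>{cand Cc, cor Cc, cnot Cc} \<union> range (cin_rel Cc) \<union> range (cin_cst Cc).
        fo_wf Map.empty {} True \<phi> \<and> fvs \<phi> \<subseteq> {..< cw Cc})
   \<and> fo_wf Map.empty {} True (cedge Cc) \<and> fvs (cedge Cc) \<subseteq> {..< 2 * cw Cc}
   \<comment> \<open>NOT gates have fan-in exactly one\<close>
   \<and> (\<forall>n>0. \<forall>x\<in>tuples n (cw Cc).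
        \<not> usat n (cand Cc) x \<and> \<not> usat n (cor Cc) x \<and> usat n (cnot Cc) x \<longrightarrow>
        (\<exists>!y. y \<in> tuples n (cw Cc) \<and> cedge_holds Cc n x y))
   \<comment> \<open>depth O(log n): every wire path has length at most cdep * (log2 n + 1)\<close>
   \<and> (\<forall>n>0. \<forall>g L. (\<forall>i\<le>L. g i \<in> tuples n (cw Cc)) \<and> (\<forall>i<L. cedge_holds Cc n (g i) (g (Suc i)))
        \<longrightarrow> real L \<le> cdep Cc * (log 2 (real n) + 1))"

definition AC1_query :: "schema \<Rightarrow> nat \<Rightarrow> (nat \<Rightarrow> (nat \<Rightarrow> nat list set) \<Rightarrow> (nat \<Rightarrow> nat) \<Rightarrow> nat list set) \<Rightarrow> bool" where
  "AC1_query S k q \<longleftrightarrow> (\<exists>Cc. circ_ok S k Cc \<and>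
     (\<forall>n>0. \<forall>I c. is_db S n I c \<longrightarrow>
        q n I c = {a \<in> tuples n k. gval Cc S n I c (dbound Cc n) (a @ replicate (cw Cc - k) 0)}))"

end

theory Submission
  imports Defs "HOL-Library.Countable"
begin

fun tren :: "(nat \<Rightarrow> nat) \<Rightarrow> trm \<Rightarrow> trm" where
  "tren f (V i) = V (f i)" | "tren f (C k) = C k"

fun ren :: "(nat \<Rightarrow> nat) \<Rightarrow> 'r fo \<Rightarrow> 'r fo" where
  "ren f (FRel R ts) = FRel R (map (tren f) ts)"
| "ren f (FEq t1 t2) = FEq (tren f t1) (tren f t2)"
| "ren f (FLe t1 t2) = FLe (tren f t1) (tren f t2)"
| "ren f (FBit t1 t2) = FBit (tren f t1) (tren f t2)"
| "ren f (FNot \<phi>) = FNot (ren f \<phi>)"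
| "ren f (FAnd \<phi> \<psi>) = FAnd (ren f \<phi>) (ren f \<psi>)"
| "ren f (FEx x \<phi>) = FEx (f x) (ren f \<phi>)"

lemma teval_tren: "teval c \<sigma> (tren f t) = teval c (\<sigma> \<circ> f) t"
  by (cases t) auto

lemma sat_ren: "inj f \<Longrightarrow> sat n I c \<sigma> (ren f \<phi>) = sat n I c (\<sigma> \<circ> f) \<phi>"
proof (induction \<phi> arbitrary: \<sigma>)
  case (FRel R ts) then show ?case by (simp add: teval_tren comp_def)
next
  case (FEx x \<phi>)
  have eq: "\<And>a. (\<sigma>(f x := a)) \<circ> f = (\<sigma> \<circ> f)(x := a)"
    using FEx.prems by (auto simp: fun_eq_iff inj_eq)
  show ?case by (simp only: ren.simps sat.simps FEx.IH[OF FEx.prems] eq)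
qed (auto simp: teval_tren)

lemma tvars_tren: "tvars (tren f t) = f ` tvars t" by (cases t) auto

lemma fvs_ren: "inj f \<Longrightarrow> fvs (ren f \<phi>) = f ` fvs \<phi>"
  by (induction \<phi>) (auto simp: tvars_tren image_Un image_set_diff)

lemma trm_ok_tren: "trm_ok cs (tren f t) = trm_ok cs t" by (cases t) auto

lemma wf_ren: "fo_wf ar cs b (ren f \<phi>) = fo_wf ar cs b \<phi>"
  by (induction \<phi>) (auto simp: trm_ok_tren)

lemma teval_cong: "(\<forall>i\<in>tvars t. \<sigma> i = \<sigma>' i) \<Longrightarrow> teval c \<sigma> t = teval c \<sigma>' t"
  by (cases t) auto

lemma sat_cong: "(\<forall>i\<in>fvs \<phi>. \<sigma> i = \<sigma>' i) \<Longrightarrow> sat n I c \<sigma> \<phi> = sat n I c \<sigma>' \<phi>"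
proof (induction \<phi> arbitrary: \<sigma> \<sigma>')
  case (FRel R ts)
  then have "map (teval c \<sigma>) ts = map (teval c \<sigma>') ts"
    by (intro map_cong refl teval_cong) auto
  then show ?case by (metis sat.simps(1))
next
  case (FEq t1 t2) then show ?case using teval_cong[of t1 \<sigma> \<sigma>' c] teval_cong[of t2 \<sigma> \<sigma>' c] by auto
next
  case (FLe t1 t2) then show ?case using teval_cong[of t1 \<sigma> \<sigma>' c] teval_cong[of t2 \<sigma> \<sigma>' c] by auto
next
  case (FBit t1 t2) then show ?case using teval_cong[of t1 \<sigma> \<sigma>' c] teval_cong[of t2 \<sigma> \<sigma>' c] by auto
next
  case (FNot \<phi>) then show ?case by simp
next
  case (FAnd \<phi> \<psi>)
  have "sat n I c \<sigma> \<phi> = sat n I c \<sigma>' \<phi>" by (rule FAnd.IH(1)) (use FAnd.prems in auto)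
  moreover have "sat n I c \<sigma> \<psi> = sat n I c \<sigma>' \<psi>" by (rule FAnd.IH(2)) (use FAnd.prems in auto)
  ultimately show ?case by simp
next
  case (FEx x \<phi>)
  have "\<And>a. sat n I c (\<sigma>(x:=a)) \<phi> = sat n I c (\<sigma>'(x:=a)) \<phi>"
    by (rule FEx.IH) (use FEx.prems in auto)
  then show ?case by simp
qed

lemma sat_cong_rel: "fo_wf ar cs b \<phi> \<Longrightarrow> (\<forall>R. ar R \<noteq> None \<longrightarrow> I R = I' R) \<Longrightarrow> sat n I c \<sigma> \<phi> = sat n I' c \<sigma> \<phi>"
  by (induction \<phi> arbitrary: \<sigma>) auto

lemma teval_c: "trm_ok {} t \<Longrightarrow> teval c \<sigma> t = teval c' \<sigma> t"
  by (cases t) auto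

lemma sat_cong_c: "fo_wf ar {} b \<phi> \<Longrightarrow> sat n I c \<sigma> \<phi> = sat n I c' \<sigma> \<phi>"
proof (induction \<phi> arbitrary: \<sigma>)
  case (FRel R ts)
  then have "map (teval c \<sigma>) ts = map (teval c' \<sigma>) ts"
    by (intro map_cong refl teval_c) auto
  then show ?case by (metis sat.simps(1))
qed (auto simp: teval_c[of _ c _ c'])

definition fodef :: "('r \<rightharpoonup> nat) \<Rightarrow> nat set \<Rightarrow> (nat \<Rightarrow> ('r \<Rightarrow> nat list set) \<Rightarrow> (nat \<Rightarrow> nat) \<Rightarrow> bool)
   \<Rightarrow> nat \<Rightarrow> (nat \<Rightarrow> ('r \<Rightarrow> nat list set) \<Rightarrow> (nat \<Rightarrow> nat) \<Rightarrow> nat list \<Rightarrow> bool) \<Rightarrow> bool" where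
  "fodef ar cs Vp r F \<longleftrightarrow> (\<exists>\<phi>. fo_wf ar cs False \<phi> \<and> fvs \<phi> \<subseteq> {..<r} \<and>
     (\<forall>n J c x. Vp n J c \<longrightarrow> 0 < n \<longrightarrow> (\<forall>k\<in>cs. c k < n) \<longrightarrow> length x = r \<longrightarrow> set x \<subseteq> {..<n} \<longrightarrow>
        sat n J c (\<lambda>i. x ! i) \<phi> = F n J c x))"

lemma fodefI:
  assumes "fo_wf ar cs False \<phi>" "fvs \<phi> \<subseteq> {..<r}"
    and "\<And>n J c x. Vp n J c \<Longrightarrow> 0 < n \<Longrightarrow> \<forall>k\<in>cs. c k < n \<Longrightarrow> length x = r \<Longrightarrow> set x \<subseteq> {..<n} \<Longrightarrow>
        sat n J c (\<lambda>i. x ! i) \<phi> = F n J c x"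
  shows "fodef ar cs Vp r F"
  using assms unfolding fodef_def by blast

lemma fodefE:
  assumes "fodef ar cs Vp r F"
  obtains \<phi> where "fo_wf ar cs False \<phi>" "fvs \<phi> \<subseteq> {..<r}"
    "\<And>n J c x. Vp n J c \<Longrightarrow> 0 < n \<Longrightarrow> \<forall>k\<in>cs. c k < n \<Longrightarrow> length x = r \<Longrightarrow> set x \<subseteq> {..<n} \<Longrightarrow>
        sat n J c (\<lambda>i. x ! i) \<phi> = F n J c x"
  using assms unfolding fodef_def by blast

lemma fodef_cong:
  assumes "fodef ar cs Vp r F"
    and "\<And>n J c x. Vp n J c \<Longrightarrow> 0 < n \<Longrightarrow> \<forall>k\<in>cs. c k < n \<Longrightarrow> length x = r \<Longrightarrow> set x \<subseteq> {..<n} \<Longrightarrow>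
        F n J c x = G n J c x"
  shows "fodef ar cs Vp r G"
  using assms unfolding fodef_def by metis

lemma fodef_true: "fodef ar cs Vp r (\<lambda>n J c x. True)"
  by (rule fodefI[where \<phi>="FEx 0 (FEq (V 0) (V 0))"]) auto

lemma fodef_not: "fodef ar cs Vp r F \<Longrightarrow> fodef ar cs Vp r (\<lambda>n J c x. \<not> F n J c x)"
  by (erule fodefE, rule_tac \<phi>="FNot \<phi>" in fodefI) auto

lemma fodef_and: "fodef ar cs Vp r F \<Longrightarrow> fodef ar cs Vp r G \<Longrightarrow> fodef ar cs Vp r (\<lambda>n J c x. F n J c x \<and> G n J c x)"
  by (erule fodefE, erule fodefE, rule_tac \<phi>="FAnd \<phi> \<phi>'" in fodefI) auto

lemma fodef_or: "fodef ar cs Vp r F \<Longrightarrow> fodef ar cs Vp r G \<Longrightarrow> fodef ar cs Vp r (\<lambda>n J c x. F n J c x \<or> G n J c x)"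
  by (drule fodef_not, drule fodef_not, drule (1) fodef_and, drule fodef_not) simp

lemma fodef_imp: "fodef ar cs Vp r F \<Longrightarrow> fodef ar cs Vp r G \<Longrightarrow> fodef ar cs Vp r (\<lambda>n J c x. F n J c x \<longrightarrow> G n J c x)"
  by (drule fodef_not, drule (1) fodef_or) simp

lemma fodef_iff: "fodef ar cs Vp r F \<Longrightarrow> fodef ar cs Vp r G \<Longrightarrow> fodef ar cs Vp r (\<lambda>n J c x. F n J c x \<longleftrightarrow> G n J c x)"
  by (frule (1) fodef_imp, frule (1) fodef_imp[rotated], drule (1) fodef_and) (simp add: iff_conv_conj_imp)

lemma fodef_false: "fodef ar cs Vp r (\<lambda>n J c x. False)"
  using fodef_not[OF fodef_true] by simp

lemma fodef_if: "fodef ar cs Vp r B \<Longrightarrow> fodef ar cs Vp r F \<Longrightarrow> fodef ar cs Vp r G \<Longrightarrow>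
   fodef ar cs Vp r (\<lambda>n J c x. if B n J c x then F n J c x else G n J c x)"
  by (frule (1) fodef_imp, drule fodef_not, drule (1) fodef_imp, drule (1) fodef_and) simp

lemma fodef_teq:
  assumes "trm_ok cs t1" "trm_ok cs t2" "tvars t1 \<subseteq> {..<r}" "tvars t2 \<subseteq> {..<r}"
  shows "fodef ar cs Vp r (\<lambda>n J c x. teval c (\<lambda>i. x ! i) t1 = teval c (\<lambda>i. x ! i) t2)"
  by (rule fodefI[where \<phi>="FEq t1 t2"]) (use assms in auto)

lemma fodef_tle:
  assumes "trm_ok cs t1" "trm_ok cs t2" "tvars t1 \<subseteq> {..<r}" "tvars t2 \<subseteq> {..<r}"
  shows "fodef ar cs Vp r (\<lambda>n J c x. teval c (\<lambda>i. x ! i) t1 \<le> teval c (\<lambda>i. x ! i) t2)"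
  by (rule fodefI[where \<phi>="FLe t1 t2"]) (use assms in auto)

lemma fodef_atom:
  assumes "ar R = Some (length ts)" "\<forall>t\<in>set ts. trm_ok cs t \<and> tvars t \<subseteq> {..<r}"
  shows "fodef ar cs Vp r (\<lambda>n J c x. map (teval c (\<lambda>i. x ! i)) ts \<in> J R)"
  by (rule fodefI[where \<phi>="FRel R ts"]) (use assms in auto)

lemma fodef_atomv:
  assumes "ar R = Some (length is)" "\<forall>i\<in>set is. i < r"
  shows "fodef ar cs Vp r (\<lambda>n J c x. map (\<lambda>i. x ! i) is \<in> J R)"
  using fodef_atom[of ar R "map V is" cs r Vp] assms by (simp add: comp_def)

lemma fodef_eqv: "i < r \<Longrightarrow> j < r \<Longrightarrow> fodef ar cs Vp r (\<lambda>n J c x. x ! i = x ! j)"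
  using fodef_teq[of cs "V i" "V j" r] by simp

lemma fodef_lev: "i < r \<Longrightarrow> j < r \<Longrightarrow> fodef ar cs Vp r (\<lambda>n J c x. x ! i \<le> x ! j)"
  using fodef_tle[of cs "V i" "V j" r] by simp

lemma fodef_eqc: "i < r \<Longrightarrow> k \<in> cs \<Longrightarrow> fodef ar cs Vp r (\<lambda>n J c x. x ! i = c k)"
  using fodef_teq[of cs "V i" "C k" r] by simp

lemma fodef_ex:
  assumes "fodef ar cs Vp (Suc r) F"
  shows "fodef ar cs Vp r (\<lambda>n J c x. \<exists>a<n. F n J c (x @ [a]))"
proof -
  obtain \<phi> where \<phi>: "fo_wf ar cs False \<phi>" "fvs \<phi> \<subseteq> {..<Suc r}"
    "\<forall>n J c x. Vp n J c \<longrightarrow> 0 < n \<longrightarrow> (\<forall>k\<in>cs. c k < n) \<longrightarrow> length x = Suc r \<longrightarrow> set x \<subseteq> {..<n} \<longrightarrow>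
        sat n J c (\<lambda>i. x ! i) \<phi> = F n J c x"
    using assms unfolding fodef_def by blast
  show ?thesis
  proof (rule fodefI[where \<phi>="FEx r \<phi>"])
    show "fvs (FEx r \<phi>) \<subseteq> {..<r}" using \<phi>(2) by auto
    fix n J c x assume h: "Vp n J c" "0 < n" "\<forall>k\<in>cs. c k < n" "length x = r" "set x \<subseteq> {..<n}"
    have "\<And>a. sat n J c ((\<lambda>i. x ! i)(r := a)) \<phi> = sat n J c (\<lambda>i. (x @ [a]) ! i) \<phi>"
      by (rule sat_cong) (use \<phi>(2) h(4) in \<open>auto simp: nth_append less_Suc_eq\<close>)
    moreover have "\<And>a. a < n \<Longrightarrow> sat n J c (\<lambda>i. (x @ [a]) ! i) \<phi> = F n J c (x @ [a])"
      using h \<phi>(3) by auto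
    ultimately show "sat n J c (\<lambda>i. x ! i) (FEx r \<phi>) = (\<exists>a<n. F n J c (x @ [a]))" by auto
  qed (use \<phi> in auto)
qed

lemma fodef_exs:
  "fodef ar cs Vp (r + j) F \<Longrightarrow>
   fodef ar cs Vp r (\<lambda>n J c x. \<exists>z. length z = j \<and> set z \<subseteq> {..<n} \<and> F n J c (x @ z))"
proof (induction j arbitrary: r F)
  case 0 then show ?case by (simp cong: conj_cong)
next
  case (Suc j)
  have "fodef ar cs Vp (Suc r + j) F" using Suc.prems by simp
  from fodef_ex[OF Suc.IH[OF this]]
  have "fodef ar cs Vp r (\<lambda>n J c x. \<exists>a<n. \<exists>z. length z = j \<and> set z \<subseteq> {..<n} \<and> F n J c (x @ [a] @ z))"
    by simp
  then show ?case
  proof (rule fodef_cong)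
    fix n J c x
    show "(\<exists>a<n. \<exists>z. length z = j \<and> set z \<subseteq> {..<n} \<and> F n J c (x @ [a] @ z)) =
          (\<exists>z. length z = Suc j \<and> set z \<subseteq> {..<n} \<and> F n J c (x @ z))"
    proof
      assume "\<exists>a<n. \<exists>z. length z = j \<and> set z \<subseteq> {..<n} \<and> F n J c (x @ [a] @ z)"
      then obtain a z where "a < n" "length z = j" "set z \<subseteq> {..<n}" "F n J c (x @ [a] @ z)" by blast
      then show "\<exists>z. length z = Suc j \<and> set z \<subseteq> {..<n} \<and> F n J c (x @ z)"
        by (intro exI[of _ "a # z"]) auto
    next
      assume "\<exists>z. length z = Suc j \<and> set z \<subseteq> {..<n} \<and> F n J c (x @ z)"
      then obtain z where z: "length z = Suc j" "set z \<subseteq> {..<n}" "F n J c (x @ z)" by blast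
      then obtain a z' where "z = a # z'" by (cases z) auto
      with z show "\<exists>a<n. \<exists>z. length z = j \<and> set z \<subseteq> {..<n} \<and> F n J c (x @ [a] @ z)"
        by (intro exI[of _ a] conjI exI[of _ z']) auto
    qed
  qed
qed

lemma fodef_all:
  assumes "fodef ar cs Vp (Suc r) F"
  shows "fodef ar cs Vp r (\<lambda>n J c x. \<forall>a<n. F n J c (x @ [a]))"
  using fodef_not[OF fodef_ex[OF fodef_not[OF assms]]] by simp

lemma fodef_alls:
  assumes "fodef ar cs Vp (r + j) F"
  shows "fodef ar cs Vp r (\<lambda>n J c x. \<forall>z. length z = j \<longrightarrow> set z \<subseteq> {..<n} \<longrightarrow> F n J c (x @ z))"
proof -
  have "fodef ar cs Vp r (\<lambda>n J c x. \<not> (\<exists>z. length z = j \<and> set z \<subseteq> {..<n} \<and> \<not> F n J c (x @ z)))"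
    by (rule fodef_not[OF fodef_exs[OF fodef_not[OF assms]]])
  then show ?thesis by (rule fodef_cong) auto
qed

lemma fodef_all_list:
  "(\<forall>i\<in>set is. fodef ar cs Vp r (F i)) \<Longrightarrow> fodef ar cs Vp r (\<lambda>n J c x. \<forall>i\<in>set is. F i n J c x)"
proof (induction "is")
  case Nil then show ?case using fodef_true by simp
next
  case (Cons a "is") then show ?case using fodef_and[of ar cs Vp r "F a"] by simp
qed

lemma fodef_all_fin:
  assumes "finite A" "\<forall>i\<in>A. fodef ar cs Vp r (F i)"
  shows "fodef ar cs Vp r (\<lambda>n J c x. \<forall>i\<in>A. F i n J c x)"
proof -
  obtain xs where "set xs = A" using finite_list[OF assms(1)] by blast
  then show ?thesis using fodef_all_list[of xs ar cs Vp r F] assms by simp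
qed

lemma fodef_ex_fin:
  assumes "finite A" "\<forall>i\<in>A. fodef ar cs Vp r (F i)"
  shows "fodef ar cs Vp r (\<lambda>n J c x. \<exists>i\<in>A. F i n J c x)"
  using fodef_not[OF fodef_all_fin[OF assms(1), of ar cs Vp r "\<lambda>i n J c x. \<not> F i n J c x"]] assms(2)
  by (simp add: fodef_not)

lemma fodef_shift:
  assumes "fodef ar cs Vp r F"
  shows "fodef ar cs Vp (d + r) (\<lambda>n J c x. F n J c (drop d x))"
proof -
  obtain \<phi> where \<phi>: "fo_wf ar cs False \<phi>" "fvs \<phi> \<subseteq> {..<r}"
    "\<forall>n J c x. Vp n J c \<longrightarrow> 0 < n \<longrightarrow> (\<forall>k\<in>cs. c k < n) \<longrightarrow> length x = r \<longrightarrow> set x \<subseteq> {..<n} \<longrightarrow>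
        sat n J c (\<lambda>i. x ! i) \<phi> = F n J c x"
    using assms unfolding fodef_def by blast
  have inj: "inj ((+) d)" by (simp add: inj_def)
  show ?thesis
  proof (rule fodefI[where \<phi>="ren ((+) d) \<phi>"])
    show "fo_wf ar cs False (ren ((+) d) \<phi>)" using \<phi>(1) by (simp add: wf_ren)
    show "fvs (ren ((+) d) \<phi>) \<subseteq> {..<d + r}" using \<phi>(2) by (auto simp: fvs_ren[OF inj])
    fix n J c x assume h: "Vp n J c" "0 < n" "\<forall>k\<in>cs. c k < n" "length x = d + r" "set x \<subseteq> {..<n}"
    have "sat n J c (\<lambda>i. x ! i) (ren ((+) d) \<phi>) = sat n J c (\<lambda>i. drop d x ! i) \<phi>"
      using h(4) by (simp add: sat_ren[OF inj] comp_def)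
    also have "\<dots> = F n J c (drop d x)"
      using h \<phi>(3) set_drop_subset[of d x] by (simp del: nth_drop)
    finally show "sat n J c (\<lambda>i. x ! i) (ren ((+) d) \<phi>) = F n J c (drop d x)" .
  qed
qed

lemma fodef_reindex:
  assumes "fodef ar cs Vp r F" "\<forall>i<r. f i < r'"
  shows "fodef ar cs Vp r' (\<lambda>n J c x. F n J c (map (\<lambda>i. x ! f i) [0..<r]))"
proof -
  have a: "fodef ar cs Vp (r' + r) (\<lambda>n J c x. F n J c (drop r' x))"
    using fodef_shift[OF assms(1)] .
  have b: "fodef ar cs Vp (r' + r) (\<lambda>n J c x. \<forall>i\<in>set [0..<r]. x ! (r' + i) = x ! f i)"
    by (rule fodef_all_list) (use assms(2) in \<open>auto intro!: fodef_eqv\<close>)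
  from fodef_exs[OF fodef_and[OF b a]]
  show ?thesis
  proof (rule fodef_cong)
    fix n :: nat and J c and x :: "nat list" assume h: "length x = r'" "set x \<subseteq> {..<n}"
    show "(\<exists>z. length z = r \<and> set z \<subseteq> {..<n} \<and>
           (\<forall>i\<in>set [0..<r]. (x @ z) ! (r' + i) = (x @ z) ! f i) \<and> F n J c (drop r' (x @ z))) =
          F n J c (map (\<lambda>i. x ! f i) [0..<r])"
    proof
      assume "\<exists>z. length z = r \<and> set z \<subseteq> {..<n} \<and>
           (\<forall>i\<in>set [0..<r]. (x @ z) ! (r' + i) = (x @ z) ! f i) \<and> F n J c (drop r' (x @ z))"
      then obtain z where z: "length z = r" "\<forall>i<r. z ! i = x ! f i" "F n J c z"
        using h assms(2) by (auto simp: nth_append)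
      have "z = map (\<lambda>i. x ! f i) [0..<r]" using z by (intro nth_equalityI) auto
      then show "F n J c (map (\<lambda>i. x ! f i) [0..<r])" using z by simp
    next
      assume F: "F n J c (map (\<lambda>i. x ! f i) [0..<r])"
      show "\<exists>z. length z = r \<and> set z \<subseteq> {..<n} \<and>
           (\<forall>i\<in>set [0..<r]. (x @ z) ! (r' + i) = (x @ z) ! f i) \<and> F n J c (drop r' (x @ z))"
        using h assms(2) F by (intro exI[of _ "map (\<lambda>i. x ! f i) [0..<r]"])
          (auto simp: nth_append intro!: subsetD[OF h(2)] nth_mem)
    qed
  qed
qed


lemma teval_shift: "teval c \<sigma> (tren ((+) p) t) = teval c (\<lambda>i. \<sigma> (p + i)) t"
  by (cases t) auto

lemma fodef_terms:
  assumes G: "fodef ar cs Vp (p + a) G" and len: "length ts = a"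
    and ts: "\<forall>t\<in>set ts. trm_ok cs t \<and> tvars t \<subseteq> {..<r}"
  shows "fodef ar cs Vp (p + r) (\<lambda>n J c y. G n J c (take p y @ map (teval c (\<lambda>i. drop p y ! i)) ts))"
proof -
  define f where "f i = (if i < p then i else p + r + (i - p))" for i
  have H1: "fodef ar cs Vp (p + r + a)
     (\<lambda>n J c x. \<forall>j\<in>set [0..<a]. teval c (\<lambda>i. x ! i) (V (p + r + j)) = teval c (\<lambda>i. x ! i) (tren ((+) p) (ts ! j)))"
  proof (rule fodef_all_list, intro ballI fodef_teq)
    fix j assume j: "j \<in> set [0..<a]"
    then have "ts ! j \<in> set ts" using len by auto
    then have "trm_ok cs (ts ! j)" "tvars (ts ! j) \<subseteq> {..<r}" using ts by auto
    then show "trm_ok cs (tren ((+) p) (ts ! j))" "tvars (tren ((+) p) (ts ! j)) \<subseteq> {..<p + r + a}"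
      by (auto simp: trm_ok_tren tvars_tren)
  qed (auto)
  have H2: "fodef ar cs Vp (p + r + a) (\<lambda>n J c x. G n J c (map (\<lambda>i. x ! f i) [0..<p + a]))"
    by (rule fodef_reindex[OF G]) (auto simp: f_def)
  from fodef_exs[OF fodef_and[OF H1 H2]]
  show ?thesis
  proof (rule fodef_cong)
    fix n :: nat and J c and y :: "nat list"
    assume h: "\<forall>k\<in>cs. c k < n" "length y = p + r" "set y \<subseteq> {..<n}"
    define M where "M = map (teval c (\<lambda>i. drop p y ! i)) ts"
    have mapeq: "\<And>z. length z = a \<Longrightarrow> map (\<lambda>i. (y @ z) ! f i) [0..<p + a] = take p y @ z"
      by (rule nth_equalityI) (use h(2) in \<open>auto simp: f_def nth_append\<close>)
    have tv: "\<And>j z. j < a \<Longrightarrow> teval c (\<lambda>i. (y @ z) ! i) (tren ((+) p) (ts ! j)) = M ! j"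
    proof -
      fix j z assume j: "j < a"
      then have "ts ! j \<in> set ts" using len by auto
      then have "tvars (ts ! j) \<subseteq> {..<r}" using ts by auto
      then show "teval c (\<lambda>i. (y @ z) ! i) (tren ((+) p) (ts ! j)) = M ! j"
        unfolding teval_shift M_def using j len h(2)
        by (auto intro!: teval_cong simp: nth_append)
    qed
    have Mr: "set M \<subseteq> {..<n}"
    proof
      fix v assume "v \<in> set M"
      then obtain t where t: "t \<in> set ts" "v = teval c (\<lambda>i. drop p y ! i) t" unfolding M_def by auto
      show "v \<in> {..<n}"
      proof (cases t)
        case (V i) then have "i < r" using ts t by auto
        then have "y ! (p + i) \<in> set y" using h(2) by simp
        then show ?thesis using t V h(2,3) by auto
      next
        case (C k) then show ?thesis using ts t h(1) by auto
      qed
    qed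
    show "(\<exists>z. length z = a \<and> set z \<subseteq> {..<n} \<and>
             (\<forall>j\<in>set [0..<a]. teval c (\<lambda>i. (y @ z) ! i) (V (p + r + j)) =
                 teval c (\<lambda>i. (y @ z) ! i) (tren ((+) p) (ts ! j))) \<and>
             G n J c (map (\<lambda>i. (y @ z) ! f i) [0..<p + a])) =
          G n J c (take p y @ M)"
    proof
      assume "\<exists>z. length z = a \<and> set z \<subseteq> {..<n} \<and>
             (\<forall>j\<in>set [0..<a]. teval c (\<lambda>i. (y @ z) ! i) (V (p + r + j)) =
                 teval c (\<lambda>i. (y @ z) ! i) (tren ((+) p) (ts ! j))) \<and>
             G n J c (map (\<lambda>i. (y @ z) ! f i) [0..<p + a])"
      then obtain z where z: "length z = a" "\<forall>j<a. z ! j = M ! j"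
          "G n J c (take p y @ z)"
        using h(2) tv mapeq by (auto simp: nth_append)
      have "z = M" using z len by (intro nth_equalityI) (auto simp: M_def)
      then show "G n J c (take p y @ M)" using z by simp
    next
      assume "G n J c (take p y @ M)"
      then show "\<exists>z. length z = a \<and> set z \<subseteq> {..<n} \<and>
             (\<forall>j\<in>set [0..<a]. teval c (\<lambda>i. (y @ z) ! i) (V (p + r + j)) =
                 teval c (\<lambda>i. (y @ z) ! i) (tren ((+) p) (ts ! j))) \<and>
             G n J c (map (\<lambda>i. (y @ z) ! f i) [0..<p + a])"
        using Mr len h(2) tv mapeq
        by (intro exI[of _ M]) (auto simp: nth_append M_def)
    qed
  qed
qed

lemma drop_nth_fun: "p \<le> length y \<Longrightarrow> (\<lambda>i. drop p y ! i) = (\<lambda>i. y ! (p + i))"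
  by auto

lemma fodef_compose:
  fixes \<phi> :: "'q fo" and Iof :: "nat \<Rightarrow> ('r \<Rightarrow> nat list set) \<Rightarrow> (nat \<Rightarrow> nat) \<Rightarrow> nat list \<Rightarrow> 'q \<Rightarrow> nat list set"
  assumes "fo_wf arz csz b \<phi>" "fvs \<phi> \<subseteq> {..<r}" and cs: "csz \<subseteq> cs"
    and rel: "\<And>R a. arz R = Some a \<Longrightarrow> fodef ar cs Vp (p + a) (\<lambda>n J c y. drop p y \<in> Iof n J c (take p y) R)"
    and bt: "b \<Longrightarrow> fodef ar cs Vp (p + 2) (\<lambda>n J c y. bit (y ! p) (y ! Suc p))"
  shows "fodef ar cs Vp (p + r) (\<lambda>n J c y. sat n (Iof n J c (take p y)) c (\<lambda>i. drop p y ! i) \<phi>)"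
  using assms(1,2)
proof (induction \<phi> arbitrary: r)
  case (FRel R ts)
  have ok: "trm_ok csz t \<Longrightarrow> trm_ok cs t" for t using cs by (cases t) auto
  have "fodef ar cs Vp (p + r) (\<lambda>n J c y. drop p (take p y @ map (teval c (\<lambda>i. drop p y ! i)) ts) \<in>
       Iof n J c (take p (take p y @ map (teval c (\<lambda>i. drop p y ! i)) ts)) R)"
    by (rule fodef_terms[OF rel]) (use FRel ok in auto)
  then show ?case by (rule fodef_cong) simp
next
  case (FEq t1 t2)
  have ok: "trm_ok csz t \<Longrightarrow> trm_ok cs t" for t using cs by (cases t) auto
  have "fodef ar cs Vp (p + r) (\<lambda>n J c y. teval c (\<lambda>i. y ! i) (tren ((+) p) t1) = teval c (\<lambda>i. y ! i) (tren ((+) p) t2))"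
    by (rule fodef_teq) (use FEq ok in \<open>auto simp: trm_ok_tren tvars_tren\<close>)
  then show ?case by (rule fodef_cong) (simp add: teval_shift)
next
  case (FLe t1 t2)
  have ok: "trm_ok csz t \<Longrightarrow> trm_ok cs t" for t using cs by (cases t) auto
  have "fodef ar cs Vp (p + r) (\<lambda>n J c y. teval c (\<lambda>i. y ! i) (tren ((+) p) t1) \<le> teval c (\<lambda>i. y ! i) (tren ((+) p) t2))"
    by (rule fodef_tle) (use FLe ok in \<open>auto simp: trm_ok_tren tvars_tren\<close>)
  then show ?case by (rule fodef_cong) (simp add: teval_shift)
next
  case (FBit t1 t2)
  have ok: "trm_ok csz t \<Longrightarrow> trm_ok cs t" for t using cs by (cases t) auto
  have "fodef ar cs Vp (p + r) (\<lambda>n J c y. (\<lambda>y'. bit (y' ! p) (y' ! Suc p)) (take p y @ map (teval c (\<lambda>i. drop p y ! i)) [t1, t2]))"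
    by (rule fodef_terms[OF bt]) (use FBit ok in auto)
  then show ?case by (rule fodef_cong) (simp add: nth_append)
next
  case (FNot \<phi>) then show ?case by (auto intro: fodef_not)
next
  case (FAnd \<phi> \<psi>) then show ?case by (auto intro: fodef_and)
next
  case (FEx v \<phi>)
  define r' where "r' = max r (Suc v)"
  have IH: "fodef ar cs Vp (p + r') (\<lambda>n J c y. sat n (Iof n J c (take p y)) c (\<lambda>i. drop p y ! i) \<phi>)"
    by (rule FEx.IH) (use FEx.prems in \<open>auto simp: r'_def\<close>)
  define f where "f i = (if i < p then i else if i - p = v then p + r else if i - p < r then i else p + r)" for i
  have "fodef ar cs Vp (Suc (p + r)) (\<lambda>n J c x. sat n (Iof n J c (take p (map (\<lambda>i. x ! f i) [0..<p + r'])))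
          c (\<lambda>i. drop p (map (\<lambda>i. x ! f i) [0..<p + r']) ! i) \<phi>)"
    by (rule fodef_reindex[OF IH]) (auto simp: f_def)
  from fodef_ex[OF this]
  show ?case
  proof (rule fodef_cong)
    fix n :: nat and J c and y :: "nat list"
    assume h: "length y = p + r"
    have tk: "\<And>a. take p (map (\<lambda>i. (y @ [a]) ! f i) [0..<p + r']) = take p y"
      by (rule nth_equalityI) (use h in \<open>auto simp: f_def nth_append\<close>)
    have sa: "\<And>a. sat n (Iof n J c (take p y)) c (\<lambda>i. drop p (map (\<lambda>i. (y @ [a]) ! f i) [0..<p + r']) ! i) \<phi>
       = sat n (Iof n J c (take p y)) c ((\<lambda>i. drop p y ! i)(v := a)) \<phi>"
    proof (rule sat_cong, intro ballI)
      fix a i assume i: "i \<in> fvs \<phi>"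
      then have "i < r'" using FEx.prems by (auto simp: r'_def)
      moreover have "i \<noteq> v \<Longrightarrow> i < r" using i FEx.prems by auto
      ultimately show "drop p (map (\<lambda>i. (y @ [a]) ! f i) [0..<p + r']) ! i = ((\<lambda>i. drop p y ! i)(v := a)) i"
        using h by (auto simp: f_def nth_append)
    qed
    show "(\<exists>a<n. sat n (Iof n J c (take p (map (\<lambda>i. (y @ [a]) ! f i) [0..<p + r']))) c
               (\<lambda>i. drop p (map (\<lambda>i. (y @ [a]) ! f i) [0..<p + r']) ! i) \<phi>) =
          sat n (Iof n J c (take p y)) c (\<lambda>i. drop p y ! i) (FEx v \<phi>)"
      by (simp only: tk sa sat.simps)
  qed
qed


datatype asym = AQ | ABit | AEmp | ACons nat | ASN nat nat | ADB nat | AVal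

instance asym :: countable by countable_datatype

lemma tuples_append: "x \<in> tuples n a \<Longrightarrow> y \<in> tuples n b \<Longrightarrow> x @ y \<in> tuples n (a + b)"
  by (auto simp: tuples_def)

lemma finite_tuples: "finite (tuples n r)"
  unfolding tuples_def using finite_lists_length_eq[of "{..<n}" r] by (simp add: conj_commute)

lemma card_tuples: "card (tuples n r) = n ^ r"
  unfolding tuples_def using card_lists_length_eq[of "{..<n}" r] by (simp add: conj_commute)

lemma rq_db:
  assumes "rq_ok S \<rho>" "is_db S n I c"
  shows "is_db S n (apply_rq S n I c \<rho> a) c"
proof -
  have "(case srel S R of None \<Rightarrow> apply_rq S n I c \<rho> a R = {} | Some r \<Rightarrow> apply_rq S n I c \<rho> a R \<subseteq> tuples n r)" for R
  proof (cases "srel S R")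
    case None
    then have "rrules \<rho> R = None" using assms(1) unfolding rq_ok_def by (metis option.distinct(1) option.exhaust)
    then show ?thesis using None assms(2) unfolding is_db_def apply_rq_def by (metis option.simps(4))
  next
    case (Some r)
    have "I R \<subseteq> tuples n r" using assms(2) Some unfolding is_db_def by (metis option.simps(5))
    then show ?thesis using Some unfolding apply_rq_def by (auto split: option.splits)
  qed
  then show ?thesis using assms(2) unfolding is_db_def by blast
qed

locale dyn =
  fixes S :: schema and kq :: nat and q :: "nat \<Rightarrow> (nat \<Rightarrow> nat list set) \<Rightarrow> (nat \<Rightarrow> nat) \<Rightarrow> nat list set"
    and \<Delta> :: "rq set" and Cc :: circ and dl :: "rq list"
  assumes sok: "schema_ok S" and cok: "circ_ok S kq Cc"
    and qrep: "\<And>n I c. 0 < n \<Longrightarrow> is_db S n I c \<Longrightarrow>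
        q n I c = {a \<in> tuples n kq. gval Cc S n I c (dbound Cc n) (a @ replicate (cw Cc - kq) 0)}"
    and dl: "set dl = \<Delta>"
    and rqok: "\<And>\<rho>. \<rho> \<in> \<Delta> \<Longrightarrow> rq_ok S \<rho> \<and> rpar \<rho> = 0"
begin

abbreviation "m \<equiv> length dl"
abbreviation "wc \<equiv> cw Cc"
definition "sw = Suc m"
definition Ln :: "nat \<Rightarrow> nat" where "Ln n = nat \<lfloor>log 2 (real n)\<rfloor>"
definition Wd :: "nat \<Rightarrow> nat list set" where "Wd n = {v. set v \<subseteq> {..<m} \<and> length v \<le> Ln n}"
definition enc :: "nat \<Rightarrow> nat list \<Rightarrow> nat list" where
  "enc n = (SOME f. inj_on f (Wd n) \<and> f ` Wd n \<subseteq> tuples n sw)"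
definition "Kl = 2 * nat \<lceil>cdep Cc\<rceil> + 1"
definition FW :: "nat \<Rightarrow> (nat \<Rightarrow> nat) \<Rightarrow> nat list \<Rightarrow> (nat \<Rightarrow> nat list set) \<Rightarrow> (nat \<Rightarrow> nat list set)" where
  "FW n c v I = fold (\<lambda>a J. apply_rq S n J c (dl ! a) []) v I"
definition Gi :: "nat \<Rightarrow> (nat \<Rightarrow> nat) \<Rightarrow> (nat \<Rightarrow> nat list set) \<Rightarrow> nat \<Rightarrow> nat list \<Rightarrow> bool" where
  "Gi n c D j = (gstep Cc S n D c ^^ j) (\<lambda>_. False)"

lemma pow_L: "0 < n \<Longrightarrow> 2 ^ Ln n \<le> n"
proof -
  assume n: "0 < n"
  have lg: "0 \<le> log 2 (real n)" using n by simp
  have "real (2 ^ Ln n) = 2 powr real (Ln n)" by (simp add: powr_realpow)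
  also have "\<dots> \<le> 2 powr log 2 (real n)"
    using lg by (intro powr_mono) (auto simp: Ln_def)
  also have "\<dots> = real n" using n by simp
  finally show ?thesis by linarith
qed

lemma log_lt_L: "0 < n \<Longrightarrow> log 2 (real n) < real (Ln n) + 1"
proof -
  assume n: "0 < n"
  have lg: "0 \<le> log 2 (real n)" using n by simp
  then have "real (Ln n) = of_int \<lfloor>log 2 (real n)\<rfloor>" by (simp add: Ln_def)
  then show ?thesis by linarith
qed

lemma card_Wd: "0 < n \<Longrightarrow> card (Wd n) \<le> card (tuples n sw)"
proof -
  assume n: "0 < n"
  define B where "B = {xs. set xs \<subseteq> {..<Suc m} \<and> length xs = Ln n}"
  define pad where "pad v = v @ replicate (Ln n - length v) m" for v
  have tw: "v \<in> Wd n \<Longrightarrow> takeWhile (\<lambda>x. x < m) (pad v) = v" for v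
    unfolding pad_def Wd_def by (subst takeWhile_append2) auto
  have inj: "inj_on pad (Wd n)"
    by (rule inj_onI) (metis tw)
  have sub: "pad ` Wd n \<subseteq> B" unfolding pad_def B_def Wd_def by auto
  have finB: "finite B" unfolding B_def using finite_lists_length_eq[of "{..<Suc m}"] by simp
  have "card (Wd n) \<le> card B" using card_inj_on_le[OF inj sub finB] .
  also have "card B = Suc m ^ Ln n" unfolding B_def by (simp add: card_lists_length_eq)
  also have "\<dots> \<le> (2 ^ sw) ^ Ln n" unfolding sw_def
    by (intro power_mono) (auto intro: less_imp_le less_exp simp del: power_Suc)
  also have "\<dots> = (2 ^ Ln n) ^ sw" by (simp add: power_mult[symmetric] mult.commute)
  also have "\<dots> \<le> n ^ sw" using pow_L[OF n] by (intro power_mono) auto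
  finally show ?thesis by (simp add: card_tuples)
qed

lemma finite_Wd: "finite (Wd n)"
proof -
  have "Wd n \<subseteq> {v. set v \<subseteq> {..<m} \<and> length v \<le> Ln n}" by (simp add: Wd_def)
  then show ?thesis using finite_lists_length_le[of "{..<m}" "Ln n"] by (simp add: Wd_def)
qed

lemma enc_props: "0 < n \<Longrightarrow> inj_on (enc n) (Wd n) \<and> enc n ` Wd n \<subseteq> tuples n sw"
proof -
  assume n: "0 < n"
  obtain f where "f ` Wd n \<subseteq> tuples n sw" "inj_on f (Wd n)"
    using card_le_inj[OF finite_Wd finite_tuples card_Wd[OF n]] by blast
  then have "\<exists>f. inj_on f (Wd n) \<and> f ` Wd n \<subseteq> tuples n sw" by blast
  then show ?thesis unfolding enc_def by (rule someI_ex)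
qed

lemma enc_tuples: "0 < n \<Longrightarrow> v \<in> Wd n \<Longrightarrow> enc n v \<in> tuples n sw"
  using enc_props by blast

lemma enc_inj: "0 < n \<Longrightarrow> v \<in> Wd n \<Longrightarrow> v' \<in> Wd n \<Longrightarrow> enc n v = enc n v' \<longleftrightarrow> v = v'"
  using enc_props by (auto dest: inj_onD)

lemma enc_len: "0 < n \<Longrightarrow> v \<in> Wd n \<Longrightarrow> length (enc n v) = sw"
  using enc_tuples by (simp add: tuples_def)

lemma Kl_bound: "0 < n \<Longrightarrow> cdep Cc * (log 2 (real n) + 1) < real (Kl * (Ln n + 1))"
proof -
  assume n: "0 < n"
  define c where "c = cdep Cc"
  define L where "L = real (Ln n)"
  have lg: "0 \<le> log 2 (real n)" "log 2 (real n) < L + 1" using n log_lt_L[OF n] by (auto simp: L_def)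
  have L0: "0 \<le> L" by (simp add: L_def)
  have K: "real Kl = 2 * real (nat \<lceil>c\<rceil>) + 1" by (simp add: Kl_def c_def)
  show ?thesis
  proof (cases "c \<le> 0")
    case True
    then have "c * (log 2 (real n) + 1) \<le> 0" using lg by (simp add: mult_nonpos_nonneg)
    moreover have "0 < real (Kl * (Ln n + 1))" by (simp only: of_nat_0_less_iff) (simp add: Kl_def)
    ultimately show ?thesis by (simp add: c_def)
  next
    case False
    then have c0: "0 < c" by simp
    have "c * (log 2 (real n) + 1) < c * (L + 2)" using lg c0 by (intro mult_strict_left_mono) auto
    also have "\<dots> \<le> 2 * c * (L + 1)" using c0 L0 by (simp add: algebra_simps)
    also have "\<dots> \<le> 2 * real (nat \<lceil>c\<rceil>) * (L + 1)"
      using L0 c0 by (intro mult_right_mono mult_left_mono) (auto intro: of_nat_ceiling)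
    also have "\<dots> \<le> real Kl * (L + 1)" unfolding K using L0 by (simp add: algebra_simps)
    finally show ?thesis by (simp add: L_def c_def distrib_left)
  qed
qed

lemma FW_Cons: "FW n c (a # v) I = FW n c v (apply_rq S n I c (dl ! a) [])"
  by (simp add: FW_def)

lemma FW_snoc: "FW n c (v @ [b]) I = apply_rq S n (FW n c v I) c (dl ! b) []"
  by (simp add: FW_def)

lemma FW_db: "is_db S n I c \<Longrightarrow> set v \<subseteq> {..<m} \<Longrightarrow> is_db S n (FW n c v I) c"
proof (induction v arbitrary: I)
  case Nil then show ?case by (simp add: FW_def)
next
  case (Cons a v)
  have "dl ! a \<in> \<Delta>" using Cons.prems dl by auto
  then have "is_db S n (apply_rq S n I c (dl ! a) []) c" using rq_db rqok Cons.prems by blast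
  then show ?case using Cons by (simp add: FW_Cons)
qed

end

context dyn begin

lemma gstep_diff:
  "gstep Cc S n D c P x \<noteq> gstep Cc S n D c P' x \<Longrightarrow> \<exists>y\<in>tuples n wc. cedge_holds Cc n x y \<and> P y \<noteq> P' y"
  unfolding gstep_def by (auto split: if_splits)

lemma gstep_cong: "(\<forall>y\<in>tuples n wc. P y = P' y) \<Longrightarrow> gstep Cc S n D c P x = gstep Cc S n D c P' x"
  using gstep_diff by blast

lemma funpow_cong:
  "(\<forall>y\<in>tuples n wc. P y = P' y) \<Longrightarrow> x \<in> tuples n wc \<Longrightarrow>
   (gstep Cc S n D c ^^ j) P x = (gstep Cc S n D c ^^ j) P' x"
proof (induction j arbitrary: x)
  case 0 then show ?case by simp
next
  case (Suc j) then show ?case by (simp add: gstep_cong)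
qed

lemma Gi_Suc: "Gi n c D (Suc j) = gstep Cc S n D c (Gi n c D j)"
  by (simp add: Gi_def)

lemma Gi_add: "Gi n c D (j + i) = (gstep Cc S n D c ^^ j) (Gi n c D i)"
  by (simp add: Gi_def funpow_add)

lemma gval_Gi: "gval Cc S n I c d = Gi n c I (Suc d)"
proof (induction d)
  case 0 then show ?case by (simp add: Gi_def fun_eq_iff)
next
  case (Suc d) then show ?case by (simp add: Gi_Suc[of _ _ _ "Suc d"])
qed

lemma path:
  "x \<in> tuples n wc \<Longrightarrow> Gi n c D (Suc j) x \<noteq> Gi n c D j x \<Longrightarrow>
   \<exists>g. g 0 = x \<and> (\<forall>i\<le>j. g i \<in> tuples n wc) \<and> (\<forall>i<j. cedge_holds Cc n (g i) (g (Suc i)))"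
proof (induction j arbitrary: x)
  case 0 then show ?case by (intro exI[of _ "\<lambda>_. x"]) auto
next
  case (Suc j)
  have "gstep Cc S n D c (Gi n c D (Suc j)) x \<noteq> gstep Cc S n D c (Gi n c D j) x"
    using Suc.prems by (simp add: Gi_Suc[of _ _ _ "Suc j"] Gi_Suc[of _ _ _ j])
  then obtain y where y: "y \<in> tuples n wc" "cedge_holds Cc n x y" "Gi n c D (Suc j) y \<noteq> Gi n c D j y"
    using gstep_diff by blast
  obtain g where g: "g 0 = y" "\<forall>i\<le>j. g i \<in> tuples n wc" "\<forall>i<j. cedge_holds Cc n (g i) (g (Suc i))"
    using Suc.IH[OF y(1) y(3)] by blast
  show ?case
  proof (intro exI[of _ "\<lambda>i. if i = 0 then x else g (i - 1)"] conjI allI impI)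
    fix i assume "i \<le> Suc j" then show "(if i = 0 then x else g (i - 1)) \<in> tuples n wc"
      using g Suc.prems by auto
  next
    fix i assume i: "i < Suc j"
    show "cedge_holds Cc n (if i = 0 then x else g (i - 1)) (if Suc i = 0 then x else g (Suc i - 1))"
    proof (cases i)
      case 0 then show ?thesis using g y by simp
    next
      case (Suc i') then show ?thesis using g i by simp
    qed
  qed simp
qed

lemma depth_bound:
  "0 < n \<Longrightarrow> (\<forall>i\<le>L. g i \<in> tuples n wc) \<Longrightarrow> (\<forall>i<L. cedge_holds Cc n (g i) (g (Suc i))) \<Longrightarrow>
   real L \<le> cdep Cc * (log 2 (real n) + 1)"
  using cok unfolding circ_ok_def by blast

lemma stab_step:
  "0 < n \<Longrightarrow> x \<in> tuples n wc \<Longrightarrow> cdep Cc * (log 2 (real n) + 1) < real j \<Longrightarrow> Gi n c D (Suc j) x = Gi n c D j x"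
proof (rule ccontr)
  assume a: "0 < n" "x \<in> tuples n wc" "cdep Cc * (log 2 (real n) + 1) < real j" "Gi n c D (Suc j) x \<noteq> Gi n c D j x"
  then obtain g where "(\<forall>i\<le>j. g i \<in> tuples n wc)" "(\<forall>i<j. cedge_holds Cc n (g i) (g (Suc i)))"
    using path by blast
  then have "real j \<le> cdep Cc * (log 2 (real n) + 1)" using depth_bound a(1) by blast
  then show False using a(3) by linarith
qed

lemma stab:
  assumes "0 < n" "x \<in> tuples n wc" "cdep Cc * (log 2 (real n) + 1) < real j0" "j0 \<le> j"
  shows "Gi n c D j x = Gi n c D j0 x"
  using assms(4)
proof (induction j rule: dec_induct)
  case base then show ?case by simp
next
  case (step j)
  have "cdep Cc * (log 2 (real n) + 1) < real j" using assms(3) step(1) by linarith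
  then show ?case using stab_step[OF assms(1,2)] step by simp
qed

lemma kq_le: "kq \<le> wc" using cok unfolding circ_ok_def by blast
lemma wc_pos: "1 \<le> wc" using cok unfolding circ_ok_def by blast

lemma q_Gi:
  assumes n: "0 < n" and db: "is_db S n I c" and x: "x \<in> tuples n kq"
  shows "Gi n c I (Kl * (Ln n + 1)) (x @ replicate (wc - kq) 0) = gval Cc S n I c (dbound Cc n) (x @ replicate (wc - kq) 0)"
proof -
  define B where "B = cdep Cc * (log 2 (real n) + 1)"
  define j0 where "j0 = min (Kl * (Ln n + 1)) (Suc (dbound Cc n))"
  have xt: "x @ replicate (wc - kq) 0 \<in> tuples n wc" using x kq_le n by (auto simp: tuples_def)
  have b1: "B < real (Kl * (Ln n + 1))" using Kl_bound[OF n] by (simp add: B_def)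
  have b2: "B < real (Suc (dbound Cc n))" unfolding B_def dbound_def by linarith
  have "B < real j0" unfolding j0_def
    by (cases "Kl * (Ln n + 1) \<le> Suc (dbound Cc n)") (use b1 b2 in \<open>simp_all only: min_def if_True if_False\<close>)
  then have B: "cdep Cc * (log 2 (real n) + 1) < real j0" by (simp only: B_def)
  have e1: "Gi n c I (Kl * (Ln n + 1)) (x @ replicate (wc - kq) 0) = Gi n c I j0 (x @ replicate (wc - kq) 0)"
    by (rule stab[OF n xt B]) (simp add: j0_def)
  have e2: "Gi n c I (Suc (dbound Cc n)) (x @ replicate (wc - kq) 0) = Gi n c I j0 (x @ replicate (wc - kq) 0)"
    by (rule stab[OF n xt B]) (simp add: j0_def)
  show ?thesis by (simp only: gval_Gi e1 e2)
qed

lemma q_mem: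
  assumes n: "0 < n" and db: "is_db S n I c" and x: "x \<in> tuples n kq"
  shows "x \<in> q n I c \<longleftrightarrow> Gi n c I (Kl * (Ln n + 1)) (x @ replicate (wc - kq) 0)"
  using q_Gi[OF assms] qrep[OF n db] x by simp

end

context dyn begin

definition aar :: "asym \<Rightarrow> nat option" where
  "aar X = (case X of AQ \<Rightarrow> Some kq | ABit \<Rightarrow> Some 2 | AEmp \<Rightarrow> Some sw
     | ACons a \<Rightarrow> (if a < m then Some (2 * sw) else None)
     | ASN a b \<Rightarrow> (if a < m \<and> b < m then Some (2 * sw) else None)
     | ADB R \<Rightarrow> map_option (\<lambda>r. r + sw) (srel S R)
     | AVal \<Rightarrow> Some (wc + sw))"

definition axr :: "nat \<Rightarrow> nat option" where
  "axr T = (if T \<in> range (to_nat :: asym \<Rightarrow> nat) then aar (from_nat T) else None)"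

lemma axr_tn[simp]: "axr (to_nat X) = aar X"
  by (simp add: axr_def)

abbreviation "arA \<equiv> case_sum (srel S) axr"

definition Ax :: "nat \<Rightarrow> (nat \<Rightarrow> nat) \<Rightarrow> (nat \<Rightarrow> nat list set) \<Rightarrow> asym \<Rightarrow> nat list set" where
  "Ax n c I X = (case X of
     AQ \<Rightarrow> q n I c
   | ABit \<Rightarrow> {[i, j] | i j. i < n \<and> j < n \<and> bit i j}
   | AEmp \<Rightarrow> {enc n []}
   | ACons a \<Rightarrow> (if a < m then {enc n v @ enc n (a # v) | v. v \<in> Wd n \<and> length v < Ln n} else {})
   | ASN a b \<Rightarrow> (if a < m \<and> b < m then {enc n v @ enc n (butlast (a # v)) | v. v \<in> Wd n \<and> length v = Ln n \<and> last (a # v) = b} else {})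
   | ADB R \<Rightarrow> (if srel S R \<noteq> None then {t @ enc n v | t v. v \<in> Wd n \<and> t \<in> FW n c v I R} else {})
   | AVal \<Rightarrow> {g @ enc n v | g v. v \<in> Wd n \<and> g \<in> tuples n wc \<and> Gi n c (FW n c v I) (Kl * (Ln n - length v + 1)) g})"

definition Vd :: "nat \<Rightarrow> ((nat + nat) \<Rightarrow> nat list set) \<Rightarrow> (nat \<Rightarrow> nat) \<Rightarrow> bool" where
  "Vd n J c \<longleftrightarrow> is_db S n (\<lambda>R. J (Inl R)) c \<and> (\<forall>X. aar X \<noteq> None \<longrightarrow> J (Inr (to_nat X)) = Ax n c (\<lambda>R. J (Inl R)) X)"

lemma Ax_simps:
  "Ax n c I AQ = q n I c"
  "Ax n c I ABit = {[i, j] | i j. i < n \<and> j < n \<and> bit i j}"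
  "Ax n c I AEmp = {enc n []}"
  "a < m \<Longrightarrow> Ax n c I (ACons a) = {enc n v @ enc n (a # v) | v. v \<in> Wd n \<and> length v < Ln n}"
  "a < m \<Longrightarrow> b < m \<Longrightarrow> Ax n c I (ASN a b) = {enc n v @ enc n (butlast (a # v)) | v. v \<in> Wd n \<and> length v = Ln n \<and> last (a # v) = b}"
  "srel S R \<noteq> None \<Longrightarrow> Ax n c I (ADB R) = {t @ enc n v | t v. v \<in> Wd n \<and> t \<in> FW n c v I R}"
  "Ax n c I AVal = {g @ enc n v | g v. v \<in> Wd n \<and> g \<in> tuples n wc \<and> Gi n c (FW n c v I) (Kl * (Ln n - length v + 1)) g}"
  by (simp_all add: Ax_def)

lemma bitrel_mem: "([a, b] \<in> {[i, j] | i j. i < n \<and> j < n \<and> bit i j}) = (a < n \<and> b < n \<and> bit a b)"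
  by auto

abbreviation FD where "FD \<equiv> fodef arA (scst S) Vd"

lemma VdJ: "Vd n J c \<Longrightarrow> aar X \<noteq> None \<Longrightarrow> J (Inr (to_nat X)) = Ax n c (\<lambda>R. J (Inl R)) X"
  by (simp add: Vd_def)

lemma Vd_db: "Vd n J c \<Longrightarrow> is_db S n (\<lambda>R. J (Inl R)) c"
  by (simp add: Vd_def)

lemma atomA:
  assumes "aar X = Some (length is)" "\<forall>i\<in>set is. i < r"
  shows "FD r (\<lambda>n J c x. map (\<lambda>i. x ! i) is \<in> J (Inr (to_nat X)))"
  by (rule fodef_atomv) (use assms in auto)

lemma BIT_fd: "FD 2 (\<lambda>n J c y. bit (y ! 0) (y ! 1))"
proof -
  have "FD 2 (\<lambda>n J c x. map (\<lambda>i. x ! i) [0, 1] \<in> J (Inr (to_nat ABit)))"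
    by (rule atomA) (auto simp: aar_def)
  then show ?thesis
  proof (rule fodef_cong)
    fix n J c and y :: "nat list" assume h: "Vd n J c" "length y = 2" "set y \<subseteq> {..<n}"
    have "y ! 0 \<in> set y" "y ! 1 \<in> set y" using h(2) by auto
    then have "y ! 0 < n" "y ! 1 < n" using h(3) by auto
    then show "(map (\<lambda>i. y ! i) [0, 1] \<in> J (Inr (to_nat ABit))) = bit (y ! 0) (y ! 1)"
    proof -
      have m: "map (\<lambda>i. y ! i) [0, 1] = [y ! 0, y ! 1]" by simp
      have ab: "aar ABit \<noteq> None" by (simp add: aar_def)
      have "J (Inr (to_nat ABit)) = {[i, j] | i j. i < n \<and> j < n \<and> bit i j}"
        using VdJ[OF h(1) ab] by (simp only: Ax_simps(2))
      then show ?thesis unfolding m using \<open>y ! 0 < n\<close> \<open>y ! 1 < n\<close> by (simp only: bitrel_mem simp_thms)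
    qed
  qed
qed

lemma BIT_fdp: "FD (p + 2) (\<lambda>n J c y. bit (y ! p) (y ! Suc p))"
proof -
  have "FD (p + 2) (\<lambda>n J c y. (\<lambda>y'. bit (y' ! 0) (y' ! 1)) (map (\<lambda>i. y ! (p + i)) [0..<2]))"
    by (rule fodef_reindex[OF BIT_fd]) auto
  then show ?thesis by (rule fodef_cong) (simp add: upt_rec)
qed

lemma circ_wf:
  "\<phi> \<in> {cand Cc, cor Cc, cnot Cc} \<union> range (cin_rel Cc) \<union> range (cin_cst Cc) \<Longrightarrow>
   fo_wf Map.empty {} True \<phi> \<and> fvs \<phi> \<subseteq> {..< wc}"
proof -
  have "\<forall>\<phi>\<in>{cand Cc, cor Cc, cnot Cc} \<union> range (cin_rel Cc) \<union> range (cin_cst Cc).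
        fo_wf Map.empty {} True \<phi> \<and> fvs \<phi> \<subseteq> {..< wc}"
    using cok unfolding circ_ok_def by (elim conjE) assumption
  then show "\<phi> \<in> {cand Cc, cor Cc, cnot Cc} \<union> range (cin_rel Cc) \<union> range (cin_cst Cc) \<Longrightarrow>
   fo_wf Map.empty {} True \<phi> \<and> fvs \<phi> \<subseteq> {..< wc}" by (rule bspec)
qed

lemma edge_wf1: "fo_wf Map.empty {} True (cedge Cc)"
  using cok unfolding circ_ok_def by (elim conjE) assumption
lemma edge_wf2: "fvs (cedge Cc) \<subseteq> {..< 2 * wc}"
  using cok unfolding circ_ok_def by (elim conjE) assumption

lemma usat_fd_gen:
  assumes "fo_wf Map.empty {} True \<phi>" "fvs \<phi> \<subseteq> {..<r}"
  shows "FD (p + r) (\<lambda>n J c y. usat n \<phi> (drop p y))"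
proof -
  have "FD (p + r) (\<lambda>n J c y. sat n ((\<lambda>n J c u R. {}) n J c (take p y)) c (\<lambda>i. drop p y ! i) \<phi>)"
  proof (rule fodef_compose[where arz="Map.empty" and csz="{}" and b=True and Iof="\<lambda>n J c u R. {}"
      and p=p and r=r and \<phi>=\<phi> and ar=arA and cs="scst S" and Vp=Vd])
    show "fo_wf Map.empty {} True \<phi>" "fvs \<phi> \<subseteq> {..<r}" by (fact assms)+
    show "{} \<subseteq> scst S" by simp
    show "\<And>R a. Map.empty R = Some a \<Longrightarrow> FD (p + a) (\<lambda>n J c y. drop p y \<in> (\<lambda>n J c u R. {}) n J c (take p y) R)"
      by (simp only: option.distinct(1))
    show "True \<Longrightarrow> FD (p + 2) (\<lambda>n J c y. bit (y ! p) (y ! Suc p))" by (rule BIT_fdp)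
  qed
  then show ?thesis
  proof (rule fodef_cong)
    fix n J c y
    show "sat n ((\<lambda>n J c u R. {}) n J c (take p y)) c (\<lambda>i. drop p y ! i) \<phi> = usat n \<phi> (drop p y)"
      unfolding usat_def by (rule sat_cong_c[OF assms(1)])
  qed
qed

lemma usat_fd:
  assumes "\<phi> \<in> {cand Cc, cor Cc, cnot Cc} \<union> range (cin_rel Cc) \<union> range (cin_cst Cc)"
  shows "FD (p + wc) (\<lambda>n J c y. usat n \<phi> (drop p y))"
proof -
  have h: "fo_wf Map.empty {} True \<phi> \<and> fvs \<phi> \<subseteq> {..< wc}" by (rule circ_wf[OF assms])
  show ?thesis by (rule usat_fd_gen[OF conjunct1[OF h] conjunct2[OF h]])
qed

lemma edge_fd: "FD (p + 2 * wc) (\<lambda>n J c y. usat n (cedge Cc) (drop p y))"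
  using edge_wf1 edge_wf2 by (rule usat_fd_gen)

end

context dyn begin

lemma srel_le_wc: "srel S R = Some r \<Longrightarrow> r \<le> wc"
proof -
  have "\<forall>R r. srel S R = Some r \<longrightarrow> r \<le> wc" using cok unfolding circ_ok_def by (elim conjE) assumption
  then show "srel S R = Some r \<Longrightarrow> r \<le> wc" by blast
qed

lemma fin_srel: "finite (dom (srel S))" using sok by (simp add: schema_ok_def)
lemma fin_scst: "finite (scst S)" using sok by (simp add: schema_ok_def)

lemma gstep_fodef:
  fixes Dof :: "nat \<Rightarrow> ((nat + nat) \<Rightarrow> nat list set) \<Rightarrow> (nat \<Rightarrow> nat) \<Rightarrow> nat list \<Rightarrow> nat \<Rightarrow> nat list set"
    and Pr :: "nat \<Rightarrow> ((nat + nat) \<Rightarrow> nat list set) \<Rightarrow> (nat \<Rightarrow> nat) \<Rightarrow> nat list \<Rightarrow> nat list \<Rightarrow> bool"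
  assumes D: "\<And>R r. srel S R = Some r \<Longrightarrow> FD (p + r) (\<lambda>n J c y. drop p y \<in> Dof n J c (take p y) R)"
    and P: "FD (p + wc) (\<lambda>n J c y. Pr n J c (take p y) (drop p y))"
  shows "FD (p + wc) (\<lambda>n J c y. gstep Cc S n (Dof n J c (take p y)) c (Pr n J c (take p y)) (drop p y))"
proof -
  have e2: "p + 2 * wc = p + wc + wc" by simp
  have E: "FD (p + wc + wc) (\<lambda>n J c z. usat n (cedge Cc) (drop p z))"
    using edge_fd[of p] unfolding e2 .
  define f where "f i = (if i < p then i else i + wc)" for i
  have P2': "FD (p + wc + wc) (\<lambda>n J c z. (\<lambda>M. Pr n J c (take p M) (drop p M)) (map (\<lambda>i. z ! f i) [0..<p + wc]))"
    by (rule fodef_reindex[OF P]) (auto simp: f_def)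
  have P2: "FD (p + wc + wc) (\<lambda>n J c z. Pr n J c (take p z) (drop (p + wc) z))"
  proof (rule fodef_cong[OF P2'])
    fix n J c and z :: "nat list" assume h: "length z = p + wc + wc"
    have M: "map (\<lambda>i. z ! f i) [0..<p + wc] = take p z @ drop (p + wc) z"
      by (rule nth_equalityI) (use h in \<open>auto simp: f_def nth_append add.commute\<close>)
    show "(\<lambda>M. Pr n J c (take p M) (drop p M)) (map (\<lambda>i. z ! f i) [0..<p + wc]) = Pr n J c (take p z) (drop (p + wc) z)"
      unfolding M using h by simp
  qed
  have AND: "FD (p + wc) (\<lambda>n J c y. \<forall>z. length z = wc \<longrightarrow> set z \<subseteq> {..<n} \<longrightarrow>
       (usat n (cedge Cc) (drop p (y @ z)) \<longrightarrow> Pr n J c (take p (y @ z)) (drop (p + wc) (y @ z))))"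
    by (rule fodef_alls[OF fodef_imp[OF E P2]])
  have OR: "FD (p + wc) (\<lambda>n J c y. \<exists>z. length z = wc \<and> set z \<subseteq> {..<n} \<and>
       (usat n (cedge Cc) (drop p (y @ z)) \<and> Pr n J c (take p (y @ z)) (drop (p + wc) (y @ z))))"
    by (rule fodef_exs[OF fodef_and[OF E P2]])
  have RP: "FD (p + wc) (\<lambda>n J c y. \<exists>R\<in>dom (srel S).
      usat n (cin_rel Cc R) (drop p y) \<and> take (the (srel S R)) (drop p y) \<in> Dof n J c (take p y) R)"
  proof (rule fodef_ex_fin[OF fin_srel], rule ballI)
    fix R assume "R \<in> dom (srel S)"
    then obtain r where r: "srel S R = Some r" by auto
    have rw: "r \<le> wc" by (rule srel_le_wc[OF r])
    have D': "FD (p + wc) (\<lambda>n J c y. (\<lambda>M. drop p M \<in> Dof n J c (take p M) R) (map (\<lambda>i. y ! i) [0..<p + r]))"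
      by (rule fodef_reindex[OF D[OF r]]) (use rw in auto)
    have D'': "FD (p + wc) (\<lambda>n J c y. take r (drop p y) \<in> Dof n J c (take p y) R)"
    proof (rule fodef_cong[OF D'])
      fix n J c and y :: "nat list" assume h: "length y = p + wc"
      have M: "map (\<lambda>i. y ! i) [0..<p + r] = take (p + r) y"
        by (rule nth_equalityI) (use h rw in auto)
      show "(\<lambda>M. drop p M \<in> Dof n J c (take p M) R) (map (\<lambda>i. y ! i) [0..<p + r]) =
            (take r (drop p y) \<in> Dof n J c (take p y) R)"
        unfolding M by (simp add: take_drop min_def add.commute)
    qed
    have U: "FD (p + wc) (\<lambda>n J c y. usat n (cin_rel Cc R) (drop p y))" by (rule usat_fd) auto
    show "FD (p + wc) (\<lambda>n J c y. usat n (cin_rel Cc R) (drop p y) \<and> take (the (srel S R)) (drop p y) \<in> Dof n J c (take p y) R)"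
      using fodef_and[OF U D''] unfolding r option.sel .
  qed
  have CP: "FD (p + wc) (\<lambda>n J c y. \<exists>k\<in>scst S. usat n (cin_cst Cc k) (drop p y) \<and> y ! p = c k)"
  proof (rule fodef_ex_fin[OF fin_scst], rule ballI)
    fix k assume k: "k \<in> scst S"
    have U: "FD (p + wc) (\<lambda>n J c y. usat n (cin_cst Cc k) (drop p y))" by (rule usat_fd) auto
    have Q: "FD (p + wc) (\<lambda>n J c y. y ! p = c k)" by (rule fodef_eqc) (use wc_pos k in auto)
    show "FD (p + wc) (\<lambda>n J c y. usat n (cin_cst Cc k) (drop p y) \<and> y ! p = c k)"
      by (rule fodef_and[OF U Q])
  qed
  have UA: "FD (p + wc) (\<lambda>n J c y. usat n (cand Cc) (drop p y))" by (rule usat_fd) auto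
  have UO: "FD (p + wc) (\<lambda>n J c y. usat n (cor Cc) (drop p y))" by (rule usat_fd) auto
  have UN: "FD (p + wc) (\<lambda>n J c y. usat n (cnot Cc) (drop p y))" by (rule usat_fd) auto
  have ALL: "FD (p + wc) (\<lambda>n J c y. if usat n (cand Cc) (drop p y) then
       (\<forall>z. length z = wc \<longrightarrow> set z \<subseteq> {..<n} \<longrightarrow>
         (usat n (cedge Cc) (drop p (y @ z)) \<longrightarrow> Pr n J c (take p (y @ z)) (drop (p + wc) (y @ z))))
     else if usat n (cor Cc) (drop p y) then
       (\<exists>z. length z = wc \<and> set z \<subseteq> {..<n} \<and>
         (usat n (cedge Cc) (drop p (y @ z)) \<and> Pr n J c (take p (y @ z)) (drop (p + wc) (y @ z))))
     else if usat n (cnot Cc) (drop p y) then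
       \<not> (\<exists>z. length z = wc \<and> set z \<subseteq> {..<n} \<and>
         (usat n (cedge Cc) (drop p (y @ z)) \<and> Pr n J c (take p (y @ z)) (drop (p + wc) (y @ z))))
     else ((\<exists>R\<in>dom (srel S).
      usat n (cin_rel Cc R) (drop p y) \<and> take (the (srel S R)) (drop p y) \<in> Dof n J c (take p y) R) \<or>
      (\<exists>k\<in>scst S. usat n (cin_cst Cc k) (drop p y) \<and> y ! p = c k)))"
    by (rule fodef_if[OF UA AND fodef_if[OF UO OR fodef_if[OF UN fodef_not[OF OR] fodef_or[OF RP CP]]]])
  show ?thesis
  proof (rule fodef_cong[OF ALL])
    fix n J c and y :: "nat list" assume h: "length y = p + wc"
    have tk: "\<And>z. take p (y @ z) = take p y" "\<And>z. drop p (y @ z) = drop p y @ z" "\<And>z. drop (p + wc) (y @ z) = z"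
      using h by auto
    have hd: "hd (drop p y) = y ! p" using h wc_pos by (simp add: hd_drop_conv_nth)
    have inv: "inval Cc S n (Dof n J c (take p y)) c (drop p y) =
      ((\<exists>R\<in>dom (srel S).
      usat n (cin_rel Cc R) (drop p y) \<and> take (the (srel S R)) (drop p y) \<in> Dof n J c (take p y) R) \<or>
      (\<exists>k\<in>scst S. usat n (cin_cst Cc k) (drop p y) \<and> y ! p = c k))"
      unfolding inval_def hd by auto
    show "(if usat n (cand Cc) (drop p y) then
       (\<forall>z. length z = wc \<longrightarrow> set z \<subseteq> {..<n} \<longrightarrow>
         (usat n (cedge Cc) (drop p (y @ z)) \<longrightarrow> Pr n J c (take p (y @ z)) (drop (p + wc) (y @ z))))
     else if usat n (cor Cc) (drop p y) then
       (\<exists>z. length z = wc \<and> set z \<subseteq> {..<n} \<and>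
         (usat n (cedge Cc) (drop p (y @ z)) \<and> Pr n J c (take p (y @ z)) (drop (p + wc) (y @ z))))
     else if usat n (cnot Cc) (drop p y) then
       \<not> (\<exists>z. length z = wc \<and> set z \<subseteq> {..<n} \<and>
         (usat n (cedge Cc) (drop p (y @ z)) \<and> Pr n J c (take p (y @ z)) (drop (p + wc) (y @ z))))
     else ((\<exists>R\<in>dom (srel S).
      usat n (cin_rel Cc R) (drop p y) \<and> take (the (srel S R)) (drop p y) \<in> Dof n J c (take p y) R) \<or>
      (\<exists>k\<in>scst S. usat n (cin_cst Cc k) (drop p y) \<and> y ! p = c k))) =
      gstep Cc S n (Dof n J c (take p y)) c (Pr n J c (take p y)) (drop p y)"
      unfolding gstep_def tk inv[symmetric] cedge_holds_def tuples_def by auto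
  qed
qed

lemma gsteps_fodef:
  fixes Dof :: "nat \<Rightarrow> ((nat + nat) \<Rightarrow> nat list set) \<Rightarrow> (nat \<Rightarrow> nat) \<Rightarrow> nat list \<Rightarrow> nat \<Rightarrow> nat list set"
    and Pof :: "nat \<Rightarrow> ((nat + nat) \<Rightarrow> nat list set) \<Rightarrow> (nat \<Rightarrow> nat) \<Rightarrow> nat list \<Rightarrow> nat list \<Rightarrow> bool"
  assumes D: "\<And>R r. srel S R = Some r \<Longrightarrow> FD (p + r) (\<lambda>n J c y. drop p y \<in> Dof n J c (take p y) R)"
    and P: "FD (p + wc) (\<lambda>n J c y. Pof n J c (take p y) (drop p y))"
  shows "FD (p + wc) (\<lambda>n J c y. (gstep Cc S n (Dof n J c (take p y)) c ^^ j) (Pof n J c (take p y)) (drop p y))"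
proof (induction j)
  case 0 then show ?case using P by simp
next
  case (Suc j)
  have "FD (p + wc) (\<lambda>n J c y. gstep Cc S n (Dof n J c (take p y)) c
      ((\<lambda>n J c u. (gstep Cc S n (Dof n J c u) c ^^ j) (Pof n J c u)) n J c (take p y)) (drop p y))"
    by (rule gstep_fodef[OF D Suc]) 
  then show ?case by simp
qed

end

context dyn begin

definition DBof :: "((nat + nat) \<Rightarrow> nat list set) \<Rightarrow> nat list \<Rightarrow> nat \<Rightarrow> nat list set" where
  "DBof J u R = (if srel S R = None then {} else {t. t @ u \<in> J (Inr (to_nat (ADB R)))})"

definition Pv :: "((nat + nat) \<Rightarrow> nat list set) \<Rightarrow> nat list \<Rightarrow> nat list \<Rightarrow> bool" where
  "Pv J u g = (g @ u \<in> J (Inr (to_nat AVal)))"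

definition Dp :: "nat \<Rightarrow> (nat \<Rightarrow> nat) \<Rightarrow> nat \<Rightarrow> ((nat + nat) \<Rightarrow> nat list set) \<Rightarrow> nat list \<Rightarrow> nat \<Rightarrow> nat list set" where
  "Dp n c b J u = apply_rq S n (DBof J u) c (dl ! b) []"

lemma dl_in: "b < m \<Longrightarrow> dl ! b \<in> \<Delta>" using dl by auto

lemma rqok_b: "b < m \<Longrightarrow> rq_ok S (dl ! b) \<and> rpar (dl ! b) = 0"
  using rqok dl_in by blast

lemma apply_rq_cong_dom:
  assumes "rq_ok S \<rho>" "\<forall>R\<in>dom (srel S). I1 R = I2 R" "R \<in> dom (srel S)"
  shows "apply_rq S n I1 c \<rho> a R = apply_rq S n I2 c \<rho> a R"
proof (cases "rrules \<rho> R")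
  case None then show ?thesis using assms by (simp add: apply_rq_def)
next
  case (Some \<mu>)
  then have wf: "fo_wf (srel S) (scst S) False \<mu>" using assms(1) unfolding rq_ok_def by blast
  have "\<And>\<sigma>. sat n I1 c \<sigma> \<mu> = sat n I2 c \<sigma> \<mu>"
    by (rule sat_cong_rel[OF wf]) (use assms(2) in auto)
  then show ?thesis using Some by (simp add: apply_rq_def)
qed

lemma gstep_D_cong:
  "(\<forall>R\<in>dom (srel S). D R = D' R) \<Longrightarrow> gstep Cc S n D c P = gstep Cc S n D' c P"
  unfolding gstep_def inval_def by (auto simp: fun_eq_iff)

lemma funpow_D_cong:
  "(\<forall>R\<in>dom (srel S). D R = D' R) \<Longrightarrow> (gstep Cc S n D c ^^ j) P = (gstep Cc S n D' c ^^ j) P"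
  by (induction j) (simp_all add: gstep_D_cong)

lemma append_tup_eq:
  "length x = length x' \<Longrightarrow> (x @ y = x' @ y') = (x = x' \<and> y = y')"
  by simp

lemma Wd_Cons: "a < m \<Longrightarrow> v \<in> Wd n \<Longrightarrow> length v < Ln n \<Longrightarrow> a # v \<in> Wd n"
  by (auto simp: Wd_def)

lemma Wd_butlast: "a < m \<Longrightarrow> v \<in> Wd n \<Longrightarrow> butlast (a # v) \<in> Wd n"
  by (auto simp: Wd_def dest: in_set_butlastD)

lemma Wd_letters: "v \<in> Wd n \<Longrightarrow> set v \<subseteq> {..<m}" by (simp add: Wd_def)

lemma last_lt: "a < m \<Longrightarrow> v \<in> Wd n \<Longrightarrow> last (a # v) < m"
  by (auto simp: Wd_def) (metis last_in_set lessThan_iff subsetD)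

lemma FW_split: "FW n c (a # v) I = apply_rq S n (FW n c (butlast (a # v)) I) c (dl ! last (a # v)) []"
proof -
  have "a # v = butlast (a # v) @ [last (a # v)]" by (rule append_butlast_last_id[symmetric]) simp
  then have "FW n c (a # v) I = FW n c (butlast (a # v) @ [last (a # v)]) I" by (rule arg_cong)
  then show ?thesis by (simp only: FW_snoc)
qed

lemma DBof_eq:
  assumes V: "Vd n J c" and n: "0 < n" and v: "v \<in> Wd n" and R: "R \<in> dom (srel S)"
  shows "DBof J (enc n v) R = FW n c v (\<lambda>R. J (Inl R)) R"
proof -
  obtain r where r: "srel S R = Some r" using R by auto
  have a: "aar (ADB R) \<noteq> None" using r by (simp add: aar_def)
  have J: "J (Inr (to_nat (ADB R))) = {t @ enc n v | t v. v \<in> Wd n \<and> t \<in> FW n c v (\<lambda>R. J (Inl R)) R}"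
    using VdJ[OF V a] Ax_simps(6)[of R n c] r by simp
  show ?thesis
  proof (rule set_eqI)
    fix t
    show "t \<in> DBof J (enc n v) R \<longleftrightarrow> t \<in> FW n c v (\<lambda>R. J (Inl R)) R"
    proof
      assume "t \<in> DBof J (enc n v) R"
      then obtain t' v' where tv: "t @ enc n v = t' @ enc n v'" "v' \<in> Wd n" "t' \<in> FW n c v' (\<lambda>R. J (Inl R)) R"
        using r J by (auto simp: DBof_def)
      have "length (enc n v) = length (enc n v')" using enc_len[OF n] v tv(2) by simp
      then have "t = t' \<and> enc n v = enc n v'" using tv(1) by simp
      then show "t \<in> FW n c v (\<lambda>R. J (Inl R)) R" using enc_inj[OF n v tv(2)] tv by simp
    next
      assume "t \<in> FW n c v (\<lambda>R. J (Inl R)) R"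
      then show "t \<in> DBof J (enc n v) R" using r J v by (auto simp: DBof_def)
    qed
  qed
qed

lemma Pv_eq:
  assumes V: "Vd n J c" and n: "0 < n" and v: "v \<in> Wd n" and g: "g \<in> tuples n wc"
  shows "Pv J (enc n v) g \<longleftrightarrow> Gi n c (FW n c v (\<lambda>R. J (Inl R))) (Kl * (Ln n - length v + 1)) g"
proof -
  have a: "aar AVal \<noteq> None" by (simp add: aar_def)
  have J: "J (Inr (to_nat AVal)) = {g @ enc n v | g v. v \<in> Wd n \<and> g \<in> tuples n wc \<and>
       Gi n c (FW n c v (\<lambda>R. J (Inl R))) (Kl * (Ln n - length v + 1)) g}"
    using VdJ[OF V a] Ax_simps(7)[of n c] by simp
  show ?thesis
  proof
    assume "Pv J (enc n v) g"
    then obtain g' v' where gv: "g @ enc n v = g' @ enc n v'" "v' \<in> Wd n" "g' \<in> tuples n wc"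
        "Gi n c (FW n c v' (\<lambda>R. J (Inl R))) (Kl * (Ln n - length v' + 1)) g'"
      using J by (auto simp: Pv_def)
    have "length g = length g'" using g gv(3) by (simp add: tuples_def)
    then have "g = g' \<and> enc n v = enc n v'" using gv(1) by simp
    then show "Gi n c (FW n c v (\<lambda>R. J (Inl R))) (Kl * (Ln n - length v + 1)) g"
      using enc_inj[OF n v gv(2)] gv by simp
  next
    assume "Gi n c (FW n c v (\<lambda>R. J (Inl R))) (Kl * (Ln n - length v + 1)) g"
    then show "Pv J (enc n v) g" using J v g by (auto simp: Pv_def)
  qed
qed

lemma Dp_eq:
  assumes V: "Vd n J c" and n: "0 < n" and a: "a < m" and v: "v \<in> Wd n"
    and R: "R \<in> dom (srel S)"
  shows "Dp n c (last (a # v)) J (enc n (butlast (a # v))) R = FW n c (a # v) (\<lambda>R. J (Inl R)) R"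
proof -
  have bw: "butlast (a # v) \<in> Wd n" by (rule Wd_butlast[OF a v])
  have lb: "last (a # v) < m" by (rule last_lt[OF a v])
  have "Dp n c (last (a # v)) J (enc n (butlast (a # v))) R =
        apply_rq S n (FW n c (butlast (a # v)) (\<lambda>R. J (Inl R))) c (dl ! last (a # v)) [] R"
    unfolding Dp_def
    by (rule apply_rq_cong_dom) (use rqok_b[OF lb] DBof_eq[OF V n bw] R in auto)
  then show ?thesis by (simp add: FW_split)
qed

end

context dyn begin

lemma ACons_mem:
  assumes V: "Vd n J c" and n: "0 < n" and a: "a < m" and u: "length u = sw"
  shows "u @ u' \<in> J (Inr (to_nat (ACons a))) \<longleftrightarrow> (\<exists>v\<in>Wd n. length v < Ln n \<and> u = enc n v \<and> u' = enc n (a # v))"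
proof -
  have aa: "aar (ACons a) \<noteq> None" using a by (simp add: aar_def)
  have J: "J (Inr (to_nat (ACons a))) = {enc n v @ enc n (a # v) | v. v \<in> Wd n \<and> length v < Ln n}"
    using VdJ[OF V aa] Ax_simps(4)[OF a, of n c] by simp
  have eq: "\<And>v. v \<in> Wd n \<Longrightarrow> (u @ u' = enc n v @ enc n (a # v)) = (u = enc n v \<and> u' = enc n (a # v))"
    using u enc_len[OF n] by (simp add: append_eq_append_conv)
  have "u @ u' \<in> J (Inr (to_nat (ACons a))) \<longleftrightarrow> (\<exists>v. (v \<in> Wd n \<and> length v < Ln n) \<and> u @ u' = enc n v @ enc n (a # v))"
    unfolding J by blast
  then show ?thesis using eq by blast
qed

lemma ASN_mem:
  assumes V: "Vd n J c" and n: "0 < n" and a: "a < m" and b: "b < m" and u: "length u = sw"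
  shows "u @ u' \<in> J (Inr (to_nat (ASN a b))) \<longleftrightarrow>
     (\<exists>v\<in>Wd n. length v = Ln n \<and> last (a # v) = b \<and> u = enc n v \<and> u' = enc n (butlast (a # v)))"
proof -
  have aa: "aar (ASN a b) \<noteq> None" using a b by (simp add: aar_def)
  have J: "J (Inr (to_nat (ASN a b))) = {enc n v @ enc n (butlast (a # v)) | v. v \<in> Wd n \<and> length v = Ln n \<and> last (a # v) = b}"
    using VdJ[OF V aa] Ax_simps(5)[OF a b, of n c] by simp
  have eq: "\<And>v. v \<in> Wd n \<Longrightarrow> (u @ u' = enc n v @ enc n (butlast (a # v))) = (u = enc n v \<and> u' = enc n (butlast (a # v)))"
    using u enc_len[OF n] by (simp add: append_eq_append_conv)
  have "u @ u' \<in> J (Inr (to_nat (ASN a b))) \<longleftrightarrow> (\<exists>v. (v \<in> Wd n \<and> length v = Ln n \<and> last (a # v) = b) \<and> u @ u' = enc n v @ enc n (butlast (a # v)))"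
    unfolding J by blast
  then show ?thesis using eq by blast
qed

lemma app_eq2: "length u = length w \<Longrightarrow> (t @ u = t' @ w) = (t = t' \<and> u = w)"
  by (simp add: append_eq_append_conv)

lemma ADB_mem:
  assumes n: "0 < n" and R: "srel S R = Some r0" and u: "length u = sw"
  shows "t @ u \<in> Ax n c K (ADB R) \<longleftrightarrow> (\<exists>v\<in>Wd n. u = enc n v \<and> t \<in> FW n c v K R)"
proof -
  have "srel S R \<noteq> None" using R by simp
  have eq: "\<And>v t'. v \<in> Wd n \<Longrightarrow> (t @ u = t' @ enc n v) = (t = t' \<and> u = enc n v)"
    using u enc_len[OF n] by (intro app_eq2) simp
  have mem: "t @ u \<in> Ax n c K (ADB R) \<longleftrightarrow> (\<exists>t' v. t @ u = t' @ enc n v \<and> v \<in> Wd n \<and> t' \<in> FW n c v K R)"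
    by (simp only: Ax_simps(6)[OF \<open>srel S R \<noteq> None\<close>, of n c K] mem_Collect_eq)
  show ?thesis
  proof
    assume "t @ u \<in> Ax n c K (ADB R)"
    then obtain t' v where tv: "t @ u = t' @ enc n v" "v \<in> Wd n" "t' \<in> FW n c v K R" using mem by blast
    then have "t = t' \<and> u = enc n v" using eq[OF tv(2)] by simp
    then show "\<exists>v\<in>Wd n. u = enc n v \<and> t \<in> FW n c v K R" using tv by blast
  next
    assume "\<exists>v\<in>Wd n. u = enc n v \<and> t \<in> FW n c v K R"
    then obtain v where "v \<in> Wd n" "u = enc n v" "t \<in> FW n c v K R" by blast
    then show "t @ u \<in> Ax n c K (ADB R)" using mem by blast
  qed
qed

lemma AVal_mem:
  assumes n: "0 < n" and u: "length u = sw"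
  shows "g @ u \<in> Ax n c K AVal \<longleftrightarrow> (\<exists>v\<in>Wd n. u = enc n v \<and> g \<in> tuples n wc \<and>
            Gi n c (FW n c v K) (Kl * (Ln n - length v + 1)) g)"
proof -
  have eq: "\<And>v g'. v \<in> Wd n \<Longrightarrow> (g @ u = g' @ enc n v) = (g = g' \<and> u = enc n v)"
    using u enc_len[OF n] by (intro app_eq2) simp
  have mem: "g @ u \<in> Ax n c K AVal \<longleftrightarrow> (\<exists>g' v. g @ u = g' @ enc n v \<and> v \<in> Wd n \<and> g' \<in> tuples n wc \<and>
       Gi n c (FW n c v K) (Kl * (Ln n - length v + 1)) g')"
    by (simp only: Ax_simps(7) mem_Collect_eq)
  show ?thesis
  proof
    assume "g @ u \<in> Ax n c K AVal"
    then obtain g' v where tv: "g @ u = g' @ enc n v" "v \<in> Wd n" "g' \<in> tuples n wc"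
       "Gi n c (FW n c v K) (Kl * (Ln n - length v + 1)) g'" using mem by blast
    then have "g = g' \<and> u = enc n v" using eq[OF tv(2)] by simp
    then show "\<exists>v\<in>Wd n. u = enc n v \<and> g \<in> tuples n wc \<and> Gi n c (FW n c v K) (Kl * (Ln n - length v + 1)) g"
      using tv by blast
  next
    assume "\<exists>v\<in>Wd n. u = enc n v \<and> g \<in> tuples n wc \<and> Gi n c (FW n c v K) (Kl * (Ln n - length v + 1)) g"
    then obtain v where "v \<in> Wd n" "u = enc n v" "g \<in> tuples n wc" "Gi n c (FW n c v K) (Kl * (Ln n - length v + 1)) g" by blast
    then show "g @ u \<in> Ax n c K AVal" using mem by blast
  qed
qed

lemma Wd_cases: "v \<in> Wd n \<Longrightarrow> length v < Ln n \<or> length v = Ln n"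
  by (auto simp: Wd_def)

lemma ADB_sem:
  assumes V: "Vd n J c" and n: "0 < n" and a: "a < m" and R: "srel S R = Some r0"
    and u: "u \<in> tuples n sw"
  shows "t @ u \<in> Ax n c (apply_rq S n (\<lambda>R. J (Inl R)) c (dl ! a) []) (ADB R) \<longleftrightarrow>
    ((\<exists>u'\<in>tuples n sw. u @ u' \<in> J (Inr (to_nat (ACons a))) \<and> t \<in> DBof J u' R) \<or>
     (\<exists>b<m. \<exists>u'\<in>tuples n sw. u @ u' \<in> J (Inr (to_nat (ASN a b))) \<and> t \<in> Dp n c b J u' R))"
  (is "?L \<longleftrightarrow> ?A \<or> ?B")
proof -
  define I where "I = (\<lambda>R. J (Inl R))"
  have ul: "length u = sw" using u by (simp add: tuples_def)
  have Rd: "R \<in> dom (srel S)" using R by auto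
  have L: "?L \<longleftrightarrow> (\<exists>v\<in>Wd n. u = enc n v \<and> t \<in> FW n c (a # v) I R)"
    using ADB_mem[OF n R ul] by (simp add: FW_Cons I_def)
  show ?thesis
  proof
    assume ?L
    then obtain v where v: "v \<in> Wd n" "u = enc n v" "t \<in> FW n c (a # v) I R" using L by blast
    show "?A \<or> ?B"
    proof (cases "length v < Ln n")
      case True
      have av: "a # v \<in> Wd n" by (rule Wd_Cons[OF a v(1) True])
      have "u @ enc n (a # v) \<in> J (Inr (to_nat (ACons a)))"
        using ACons_mem[OF V n a ul] v True by blast
      moreover have "t \<in> DBof J (enc n (a # v)) R" using DBof_eq[OF V n av Rd] v(3) by (simp add: I_def)
      moreover have "enc n (a # v) \<in> tuples n sw" by (rule enc_tuples[OF n av])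
      ultimately show ?thesis by blast
    next
      case False
      then have lv: "length v = Ln n" using Wd_cases[OF v(1)] by simp
      define b where "b = last (a # v)"
      have b: "b < m" unfolding b_def by (rule last_lt[OF a v(1)])
      have bw: "butlast (a # v) \<in> Wd n" by (rule Wd_butlast[OF a v(1)])
      have "u @ enc n (butlast (a # v)) \<in> J (Inr (to_nat (ASN a b)))"
        using ASN_mem[OF V n a b ul] v lv b_def by blast
      moreover have "t \<in> Dp n c b J (enc n (butlast (a # v))) R"
        using Dp_eq[OF V n a v(1) Rd] v(3) by (simp add: I_def b_def)
      moreover have "enc n (butlast (a # v)) \<in> tuples n sw" by (rule enc_tuples[OF n bw])
      ultimately show ?thesis using b by blast
    qed
  next
    assume "?A \<or> ?B"
    then show ?L
    proof
      assume ?A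
      then obtain u' where u': "u' \<in> tuples n sw" "u @ u' \<in> J (Inr (to_nat (ACons a)))" "t \<in> DBof J u' R"
        by blast
      then obtain v where v: "v \<in> Wd n" "length v < Ln n" "u = enc n v" "u' = enc n (a # v)"
        using ACons_mem[OF V n a ul] by blast
      have av: "a # v \<in> Wd n" by (rule Wd_Cons[OF a v(1,2)])
      have "t \<in> FW n c (a # v) I R" using DBof_eq[OF V n av Rd] u'(3) v(4) by (simp add: I_def)
      then show ?L using L v by blast
    next
      assume ?B
      then obtain b u' where u': "b < m" "u' \<in> tuples n sw" "u @ u' \<in> J (Inr (to_nat (ASN a b)))" "t \<in> Dp n c b J u' R"
        by blast
      then obtain v where v: "v \<in> Wd n" "length v = Ln n" "last (a # v) = b" "u = enc n v" "u' = enc n (butlast (a # v))"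
        using ASN_mem[OF V n a u'(1) ul] by blast
      have "t \<in> FW n c (a # v) I R" using Dp_eq[OF V n a v(1) Rd] u'(4) v by (simp add: I_def)
      then show ?L using L v by blast
    qed
  qed
qed

lemma Gi_step_eq:
  assumes n: "0 < n" and lv: "length v < Ln n" and g: "g \<in> tuples n wc"
    and P: "\<forall>y\<in>tuples n wc. P y = Gi n c D (Kl * (Ln n - length (a # v) + 1)) y"
  shows "(gstep Cc S n D c ^^ Kl) P g = Gi n c D (Kl * (Ln n - length v + 1)) g"
proof -
  have e: "Kl * (Ln n - length v + 1) = Kl + Kl * (Ln n - length (a # v) + 1)"
    using lv by (simp add: algebra_simps Suc_diff_Suc)
  show ?thesis unfolding e Gi_add by (rule funpow_cong[OF P g])
qed

lemma AVal_sem: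
  assumes V: "Vd n J c" and n: "0 < n" and a: "a < m"
    and u: "u \<in> tuples n sw" and g: "g \<in> tuples n wc"
  shows "g @ u \<in> Ax n c (apply_rq S n (\<lambda>R. J (Inl R)) c (dl ! a) []) AVal \<longleftrightarrow>
    ((\<exists>u'\<in>tuples n sw. u @ u' \<in> J (Inr (to_nat (ACons a))) \<and> (gstep Cc S n (DBof J u') c ^^ Kl) (Pv J u') g) \<or>
     (\<exists>b<m. \<exists>u'\<in>tuples n sw. u @ u' \<in> J (Inr (to_nat (ASN a b))) \<and> (gstep Cc S n (Dp n c b J u') c ^^ Kl) (\<lambda>_. False) g))"
  (is "?L \<longleftrightarrow> ?A \<or> ?B")
proof -
  define I where "I = (\<lambda>R. J (Inl R))"
  have ul: "length u = sw" using u by (simp add: tuples_def)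
  have L: "?L \<longleftrightarrow> (\<exists>v\<in>Wd n. u = enc n v \<and> Gi n c (FW n c (a # v) I) (Kl * (Ln n - length v + 1)) g)"
    using AVal_mem[OF n ul] g by (simp add: FW_Cons I_def)
  have A: "(gstep Cc S n (DBof J (enc n (a # v))) c ^^ Kl) (Pv J (enc n (a # v))) g =
           Gi n c (FW n c (a # v) I) (Kl * (Ln n - length v + 1)) g"
    if v: "v \<in> Wd n" "length v < Ln n" for v
  proof -
    have av: "a # v \<in> Wd n" by (rule Wd_Cons[OF a v])
    have "(gstep Cc S n (DBof J (enc n (a # v))) c ^^ Kl) (Pv J (enc n (a # v))) g =
          (gstep Cc S n (FW n c (a # v) I) c ^^ Kl) (Pv J (enc n (a # v))) g"
      using funpow_D_cong[of "DBof J (enc n (a # v))" "FW n c (a # v) I"] DBof_eq[OF V n av]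
      by (simp add: I_def)
    also have "\<dots> = Gi n c (FW n c (a # v) I) (Kl * (Ln n - length v + 1)) g"
      by (rule Gi_step_eq[OF n v(2) g]) (use Pv_eq[OF V n av] in \<open>simp add: I_def\<close>)
    finally show ?thesis .
  qed
  have B: "(gstep Cc S n (Dp n c (last (a # v)) J (enc n (butlast (a # v)))) c ^^ Kl) (\<lambda>_. False) g =
           Gi n c (FW n c (a # v) I) (Kl * (Ln n - length v + 1)) g"
    if v: "v \<in> Wd n" "length v = Ln n" for v
  proof -
    have "(gstep Cc S n (Dp n c (last (a # v)) J (enc n (butlast (a # v)))) c ^^ Kl) (\<lambda>_. False) =
          (gstep Cc S n (FW n c (a # v) I) c ^^ Kl) (\<lambda>_. False)"
      using funpow_D_cong Dp_eq[OF V n a v(1)] by (simp add: I_def)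
    then show ?thesis using v(2) by (simp add: Gi_def)
  qed
  show ?thesis
  proof
    assume ?L
    then obtain v where v: "v \<in> Wd n" "u = enc n v" "Gi n c (FW n c (a # v) I) (Kl * (Ln n - length v + 1)) g"
      using L by blast
    show "?A \<or> ?B"
    proof (cases "length v < Ln n")
      case True
      have av: "a # v \<in> Wd n" by (rule Wd_Cons[OF a v(1) True])
      have "u @ enc n (a # v) \<in> J (Inr (to_nat (ACons a)))"
        using ACons_mem[OF V n a ul] v True by blast
      moreover have "enc n (a # v) \<in> tuples n sw" by (rule enc_tuples[OF n av])
      ultimately show ?thesis using A[OF v(1) True] v(3) by blast
    next
      case False
      then have lv: "length v = Ln n" using Wd_cases[OF v(1)] by simp
      define b where "b = last (a # v)"
      have b: "b < m" unfolding b_def by (rule last_lt[OF a v(1)])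
      have bw: "butlast (a # v) \<in> Wd n" by (rule Wd_butlast[OF a v(1)])
      have "u @ enc n (butlast (a # v)) \<in> J (Inr (to_nat (ASN a b)))"
        using ASN_mem[OF V n a b ul] v lv b_def by blast
      moreover have "enc n (butlast (a # v)) \<in> tuples n sw" by (rule enc_tuples[OF n bw])
      ultimately show ?thesis using b B[OF v(1) lv] v(3) unfolding b_def by blast
    qed
  next
    assume "?A \<or> ?B"
    then show ?L
    proof
      assume ?A
      then obtain u' where u': "u' \<in> tuples n sw" "u @ u' \<in> J (Inr (to_nat (ACons a)))"
          "(gstep Cc S n (DBof J u') c ^^ Kl) (Pv J u') g"
        by blast
      then obtain v where v: "v \<in> Wd n" "length v < Ln n" "u = enc n v" "u' = enc n (a # v)"
        using ACons_mem[OF V n a ul] by blast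
      then show ?L using L A[OF v(1,2)] u'(3) by blast
    next
      assume ?B
      then obtain b u' where u': "b < m" "u' \<in> tuples n sw" "u @ u' \<in> J (Inr (to_nat (ASN a b)))"
          "(gstep Cc S n (Dp n c b J u') c ^^ Kl) (\<lambda>_. False) g"
        by blast
      then obtain v where v: "v \<in> Wd n" "length v = Ln n" "last (a # v) = b" "u = enc n v" "u' = enc n (butlast (a # v))"
        using ASN_mem[OF V n a u'(1) ul] by blast
      then show ?L using L B[OF v(1,2)] u'(4) by blast
    qed
  qed
qed

end

context dyn begin

definition Tgt :: "nat \<Rightarrow> asym \<Rightarrow> nat \<Rightarrow> ((nat + nat) \<Rightarrow> nat list set) \<Rightarrow> (nat \<Rightarrow> nat) \<Rightarrow> nat list \<Rightarrow> bool" where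
  "Tgt a X n J c x = (x \<in> Ax n c (apply_rq S n (\<lambda>R. J (Inl R)) c (dl ! a) []) X)"

lemma map_nth_upt: "length z = a + b \<Longrightarrow> map (\<lambda>i. z ! i) [a..<a + b] = drop a z"
  by (rule nth_equalityI) auto

lemma DB_atom:
  assumes R: "srel S R = Some r"
  shows "FD (sw + r) (\<lambda>n J c y. drop sw y \<in> DBof J (take sw y) R)"
proof -
  have A: "FD (sw + r) (\<lambda>n J c y. map (\<lambda>i. y ! i) ([sw..<sw + r] @ [0..<sw]) \<in> J (Inr (to_nat (ADB R))))"
    by (rule atomA) (use R in \<open>auto simp: aar_def\<close>)
  show ?thesis
  proof (rule fodef_cong[OF A])
    fix n J c and y :: "nat list" assume h: "length y = sw + r"
    have M: "map (\<lambda>i. y ! i) ([sw..<sw + r] @ [0..<sw]) = drop sw y @ take sw y"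
      by (rule nth_equalityI) (use h in \<open>auto simp: nth_append\<close>)
    show "(map (\<lambda>i. y ! i) ([sw..<sw + r] @ [0..<sw]) \<in> J (Inr (to_nat (ADB R)))) = (drop sw y \<in> DBof J (take sw y) R)"
      unfolding M DBof_def using R by simp
  qed
qed

lemma Pv_atom: "FD (sw + wc) (\<lambda>n J c y. Pv J (take sw y) (drop sw y))"
proof -
  have A: "FD (sw + wc) (\<lambda>n J c y. map (\<lambda>i. y ! i) ([sw..<sw + wc] @ [0..<sw]) \<in> J (Inr (to_nat AVal)))"
    by (rule atomA) (auto simp: aar_def)
  show ?thesis
  proof (rule fodef_cong[OF A])
    fix n J c and y :: "nat list" assume h: "length y = sw + wc"
    have M: "map (\<lambda>i. y ! i) ([sw..<sw + wc] @ [0..<sw]) = drop sw y @ take sw y"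
      by (rule nth_equalityI) (use h in \<open>auto simp: nth_append\<close>)
    show "(map (\<lambda>i. y ! i) ([sw..<sw + wc] @ [0..<sw]) \<in> J (Inr (to_nat AVal))) = Pv J (take sw y) (drop sw y)"
      unfolding M Pv_def by simp
  qed
qed

lemma Dp_fd:
  assumes b: "b < m" and R: "srel S R = Some r"
  shows "FD (sw + r) (\<lambda>n J c y. drop sw y \<in> Dp n c b J (take sw y) R)"
proof (cases "rrules (dl ! b) R")
  case None
  show ?thesis
  proof (rule fodef_cong[OF DB_atom[OF R]])
    fix n J c and y :: "nat list"
    show "(drop sw y \<in> DBof J (take sw y) R) = (drop sw y \<in> Dp n c b J (take sw y) R)"
      using None by (simp add: Dp_def apply_rq_def)
  qed
next
  case (Some \<mu>)
  have ok: "rq_ok S (dl ! b)" "rpar (dl ! b) = 0" using rqok_b[OF b] by auto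
  then have wf: "fo_wf (srel S) (scst S) False \<mu>" "fvs \<mu> \<subseteq> {..<r}"
    using Some R unfolding rq_ok_def by force+
  have C: "FD (sw + r) (\<lambda>n J c y. sat n ((\<lambda>n J c u. DBof J u) n J c (take sw y)) c (\<lambda>i. drop sw y ! i) \<mu>)"
  proof (rule fodef_compose[where arz="srel S" and csz="scst S" and b=False and Iof="\<lambda>n J c u. DBof J u"
      and p=sw and r=r and \<phi>=\<mu> and ar=arA and cs="scst S" and Vp=Vd])
    show "fo_wf (srel S) (scst S) False \<mu>" "fvs \<mu> \<subseteq> {..<r}" by (fact wf)+
    show "scst S \<subseteq> scst S" by (rule order_refl)
    show "\<And>R a. srel S R = Some a \<Longrightarrow> FD (sw + a) (\<lambda>n J c y. drop sw y \<in> (\<lambda>n J c u. DBof J u) n J c (take sw y) R)"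
      by (rule DB_atom)
    show "False \<Longrightarrow> FD (sw + 2) (\<lambda>n J c y. bit (y ! sw) (y ! Suc sw))" by (rule FalseE)
  qed
  show ?thesis
  proof (rule fodef_cong[OF C])
    fix n J c and y :: "nat list" assume h: "length y = sw + r" "set y \<subseteq> {..<n}"
    have "drop sw y \<in> tuples n r" using h set_drop_subset[of sw y] by (auto simp: tuples_def)
    then show "sat n ((\<lambda>n J c u. DBof J u) n J c (take sw y)) c (\<lambda>i. drop sw y ! i) \<mu> = (drop sw y \<in> Dp n c b J (take sw y) R)"
      using Some R by (simp add: Dp_def apply_rq_def)
  qed
qed

lemma Ax_static: "X \<in> {ABit, AEmp} \<union> range ACons \<union> range (\<lambda>(a, b). ASN a b) \<Longrightarrow> Ax n c I X = Ax n c I' X"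
  by (auto simp: Ax_def)

lemma Tgt_static:
  assumes X: "X \<in> {ABit, AEmp} \<union> range ACons \<union> range (\<lambda>(a, b). ASN a b)" and r: "aar X = Some r"
  shows "FD r (Tgt a X)"
proof -
  have A: "FD r (\<lambda>n J c x. map (\<lambda>i. x ! i) [0..<r] \<in> J (Inr (to_nat X)))"
    by (rule atomA) (use r in auto)
  show ?thesis
  proof (rule fodef_cong[OF A])
    fix n J c and x :: "nat list" assume h: "Vd n J c" "length x = r"
    have M: "map (\<lambda>i. x ! i) [0..<r] = x" using h(2) by (intro nth_equalityI) auto
    show "(map (\<lambda>i. x ! i) [0..<r] \<in> J (Inr (to_nat X))) = Tgt a X n J c x"
      unfolding M Tgt_def using VdJ[OF h(1)] r Ax_static[OF X, of n c "\<lambda>R. J (Inl R)" "apply_rq S n (\<lambda>R. J (Inl R)) c (dl ! a) []"] by simp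
  qed
qed

end

context dyn begin

lemma link_atom:
  assumes X: "aar X = Some (2 * sw)"
  shows "FD (r0 + sw + sw) (\<lambda>n J c z. drop r0 z \<in> J (Inr (to_nat X)))"
proof -
  have A: "FD (r0 + sw + sw) (\<lambda>n J c z. map (\<lambda>i. z ! i) [r0..<r0 + (sw + sw)] \<in> J (Inr (to_nat X)))"
    by (rule atomA) (use X in auto)
  show ?thesis
  proof (rule fodef_cong[OF A])
    fix n J c and z :: "nat list" assume h: "length z = r0 + sw + sw"
    show "(map (\<lambda>i. z ! i) [r0..<r0 + (sw + sw)] \<in> J (Inr (to_nat X))) = (drop r0 z \<in> J (Inr (to_nat X)))"
      using map_nth_upt[of z r0 "sw + sw"] h by simp
  qed
qed

lemma lift_param:
  fixes G :: "nat \<Rightarrow> ((nat + nat) \<Rightarrow> nat list set) \<Rightarrow> (nat \<Rightarrow> nat) \<Rightarrow> nat list \<Rightarrow> nat list \<Rightarrow> bool"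
  assumes A: "FD (sw + r0) (\<lambda>n J c y. G n J c (take sw y) (drop sw y))"
  shows "FD (r0 + sw + sw) (\<lambda>n J c z. G n J c (drop (r0 + sw) z) (take r0 z))"
proof -
  define f where "f i = (if i < sw then r0 + sw + i else i - sw)" for i
  have B: "FD (r0 + sw + sw) (\<lambda>n J c z. (\<lambda>y. G n J c (take sw y) (drop sw y)) (map (\<lambda>i. z ! f i) [0..<sw + r0]))"
    by (rule fodef_reindex[OF A]) (auto simp: f_def)
  show ?thesis
  proof (rule fodef_cong[OF B])
    fix n J c and z :: "nat list" assume h: "length z = r0 + sw + sw"
    have M: "map (\<lambda>i. z ! f i) [0..<sw + r0] = drop (r0 + sw) z @ take r0 z"
      by (rule nth_equalityI) (use h in \<open>auto simp: f_def nth_append add.commute\<close>)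
    show "(\<lambda>y. G n J c (take sw y) (drop sw y)) (map (\<lambda>i. z ! f i) [0..<sw + r0]) =
          G n J c (drop (r0 + sw) z) (take r0 z)"
      unfolding M using h by simp
  qed
qed

lemma Tgt_gen:
  fixes G1 G2 :: "nat \<Rightarrow> nat \<Rightarrow> ((nat + nat) \<Rightarrow> nat list set) \<Rightarrow> (nat \<Rightarrow> nat) \<Rightarrow> nat list \<Rightarrow> nat list \<Rightarrow> bool"
  assumes a: "a < m"
    and G1: "FD (sw + r0) (\<lambda>n J c y. G1 0 n J c (take sw y) (drop sw y))"
    and G2: "\<And>b. b < m \<Longrightarrow> FD (sw + r0) (\<lambda>n J c y. G2 b n J c (take sw y) (drop sw y))"
  shows "FD (r0 + sw) (\<lambda>n J c x.
    (\<exists>u'. length u' = sw \<and> set u' \<subseteq> {..<n} \<and> drop r0 x @ u' \<in> J (Inr (to_nat (ACons a))) \<and> G1 0 n J c u' (take r0 x)) \<or>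
    (\<exists>b\<in>{..<m}. \<exists>u'. length u' = sw \<and> set u' \<subseteq> {..<n} \<and> drop r0 x @ u' \<in> J (Inr (to_nat (ASN a b))) \<and> G2 b n J c u' (take r0 x)))"
proof -
  have P1: "FD (r0 + sw) (\<lambda>n J c x. \<exists>u'. length u' = sw \<and> set u' \<subseteq> {..<n} \<and>
      (drop r0 (x @ u') \<in> J (Inr (to_nat (ACons a))) \<and> G1 0 n J c (drop (r0 + sw) (x @ u')) (take r0 (x @ u'))))"
    by (rule fodef_exs[OF fodef_and[OF link_atom lift_param[OF G1]]]) (use a in \<open>simp add: aar_def\<close>)
  have P2: "FD (r0 + sw) (\<lambda>n J c x. \<exists>b\<in>{..<m}. \<exists>u'. length u' = sw \<and> set u' \<subseteq> {..<n} \<and>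
      (drop r0 (x @ u') \<in> J (Inr (to_nat (ASN a b))) \<and> G2 b n J c (drop (r0 + sw) (x @ u')) (take r0 (x @ u'))))"
  proof (rule fodef_ex_fin, simp, rule ballI)
    fix b assume "b \<in> {..<m}"
    then have b: "b < m" by simp
    show "FD (r0 + sw) (\<lambda>n J c x. \<exists>u'. length u' = sw \<and> set u' \<subseteq> {..<n} \<and>
      (drop r0 (x @ u') \<in> J (Inr (to_nat (ASN a b))) \<and> G2 b n J c (drop (r0 + sw) (x @ u')) (take r0 (x @ u'))))"
      by (rule fodef_exs[OF fodef_and[OF link_atom lift_param[OF G2[OF b]]]]) (use a b in \<open>simp add: aar_def\<close>)
  qed
  show ?thesis
  proof (rule fodef_cong[OF fodef_or[OF P1 P2]])
    fix n J c and x :: "nat list" assume h: "length x = r0 + sw"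
    have e: "\<And>u'. drop r0 (x @ u') = drop r0 x @ u'" "\<And>u'. length u' = sw \<Longrightarrow> drop (r0 + sw) (x @ u') = u'"
      "\<And>u'. take r0 (x @ u') = take r0 x" using h by auto
    show "((\<exists>u'. length u' = sw \<and> set u' \<subseteq> {..<n} \<and>
      (drop r0 (x @ u') \<in> J (Inr (to_nat (ACons a))) \<and> G1 0 n J c (drop (r0 + sw) (x @ u')) (take r0 (x @ u')))) \<or>
      (\<exists>b\<in>{..<m}. \<exists>u'. length u' = sw \<and> set u' \<subseteq> {..<n} \<and>
      (drop r0 (x @ u') \<in> J (Inr (to_nat (ASN a b))) \<and> G2 b n J c (drop (r0 + sw) (x @ u')) (take r0 (x @ u'))))) =
      ((\<exists>u'. length u' = sw \<and> set u' \<subseteq> {..<n} \<and> drop r0 x @ u' \<in> J (Inr (to_nat (ACons a))) \<and> G1 0 n J c u' (take r0 x)) \<or>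
      (\<exists>b\<in>{..<m}. \<exists>u'. length u' = sw \<and> set u' \<subseteq> {..<n} \<and> drop r0 x @ u' \<in> J (Inr (to_nat (ASN a b))) \<and> G2 b n J c u' (take r0 x)))"
      using e by (intro iffI; elim disjE exE bexE conjE; metis)
  qed
qed

end

context dyn begin

lemma Tgt_ADB:
  assumes a: "a < m" and R: "srel S R = Some r0"
  shows "FD (r0 + sw) (Tgt a (ADB R))"
proof -
  have G: "FD (r0 + sw) (\<lambda>n J c x.
    (\<exists>u'. length u' = sw \<and> set u' \<subseteq> {..<n} \<and> drop r0 x @ u' \<in> J (Inr (to_nat (ACons a))) \<and> (\<lambda>b n J c u' t. t \<in> DBof J u' R) 0 n J c u' (take r0 x)) \<or>
    (\<exists>b\<in>{..<m}. \<exists>u'. length u' = sw \<and> set u' \<subseteq> {..<n} \<and> drop r0 x @ u' \<in> J (Inr (to_nat (ASN a b))) \<and> (\<lambda>b n J c u' t. t \<in> Dp n c b J u' R) b n J c u' (take r0 x)))"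
  proof (rule Tgt_gen[OF a])
    show "FD (sw + r0) (\<lambda>n J c y. (\<lambda>b n J c u' t. t \<in> DBof J u' R) 0 n J c (take sw y) (drop sw y))"
      using DB_atom[OF R] by simp
    show "\<And>b. b < m \<Longrightarrow> FD (sw + r0) (\<lambda>n J c y. (\<lambda>b n J c u' t. t \<in> Dp n c b J u' R) b n J c (take sw y) (drop sw y))"
      using Dp_fd[OF _ R] by simp
  qed
  show ?thesis
  proof (rule fodef_cong[OF G])
    fix n J c and x :: "nat list" assume h: "Vd n J c" "0 < n" "length x = r0 + sw" "set x \<subseteq> {..<n}"
    have u: "drop r0 x \<in> tuples n sw" using h(3,4) set_drop_subset[of r0 x] by (auto simp: tuples_def)
    have x: "x = take r0 x @ drop r0 x" by simp
    show "((\<exists>u'. length u' = sw \<and> set u' \<subseteq> {..<n} \<and> drop r0 x @ u' \<in> J (Inr (to_nat (ACons a))) \<and> (\<lambda>b n J c u' t. t \<in> DBof J u' R) 0 n J c u' (take r0 x)) \<or>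
    (\<exists>b\<in>{..<m}. \<exists>u'. length u' = sw \<and> set u' \<subseteq> {..<n} \<and> drop r0 x @ u' \<in> J (Inr (to_nat (ASN a b))) \<and> (\<lambda>b n J c u' t. t \<in> Dp n c b J u' R) b n J c u' (take r0 x))) =
      Tgt a (ADB R) n J c x"
    proof -
      have e: "Tgt a (ADB R) n J c x = (take r0 x @ drop r0 x \<in> Ax n c (apply_rq S n (\<lambda>R. J (Inl R)) c (dl ! a) []) (ADB R))"
        unfolding Tgt_def by simp
      show ?thesis unfolding e ADB_sem[OF h(1,2) a R u, of "take r0 x"] by (simp add: tuples_def Bex_def lessThan_iff)
    qed
  qed
qed

lemma Tgt_AVal:
  assumes a: "a < m"
  shows "FD (wc + sw) (Tgt a AVal)"
proof -
  have G: "FD (wc + sw) (\<lambda>n J c x.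
    (\<exists>u'. length u' = sw \<and> set u' \<subseteq> {..<n} \<and> drop wc x @ u' \<in> J (Inr (to_nat (ACons a))) \<and>
       (\<lambda>b n J c u' g. (gstep Cc S n (DBof J u') c ^^ Kl) (Pv J u') g) 0 n J c u' (take wc x)) \<or>
    (\<exists>b\<in>{..<m}. \<exists>u'. length u' = sw \<and> set u' \<subseteq> {..<n} \<and> drop wc x @ u' \<in> J (Inr (to_nat (ASN a b))) \<and>
       (\<lambda>b n J c u' g. (gstep Cc S n (Dp n c b J u') c ^^ Kl) (\<lambda>_. False) g) b n J c u' (take wc x)))"
  proof (rule Tgt_gen[OF a])
    have "FD (sw + wc) (\<lambda>n J c y. (gstep Cc S n ((\<lambda>n J c u. DBof J u) n J c (take sw y)) c ^^ Kl)
            ((\<lambda>n J c u g. Pv J u g) n J c (take sw y)) (drop sw y))"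
      by (rule gsteps_fodef[where p=sw and Dof="\<lambda>n J c u. DBof J u" and Pof="\<lambda>n J c u g. Pv J u g" and j=Kl])
         (use DB_atom Pv_atom in simp_all)
    then show "FD (sw + wc) (\<lambda>n J c y. (\<lambda>b n J c u' g. (gstep Cc S n (DBof J u') c ^^ Kl) (Pv J u') g) 0 n J c (take sw y) (drop sw y))"
      by simp
    show "\<And>b. b < m \<Longrightarrow> FD (sw + wc) (\<lambda>n J c y. (\<lambda>b n J c u' g. (gstep Cc S n (Dp n c b J u') c ^^ Kl) (\<lambda>_. False) g) b n J c (take sw y) (drop sw y))"
    proof -
      fix b assume b: "b < m"
      have "FD (sw + wc) (\<lambda>n J c y. (gstep Cc S n ((\<lambda>n J c u. Dp n c b J u) n J c (take sw y)) c ^^ Kl)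
            ((\<lambda>n J c u g. False) n J c (take sw y)) (drop sw y))"
        by (rule gsteps_fodef[where p=sw and Dof="\<lambda>n J c u. Dp n c b J u" and Pof="\<lambda>n J c u g. False" and j=Kl])
           (use Dp_fd[OF b] fodef_false in simp_all)
      then show "FD (sw + wc) (\<lambda>n J c y. (\<lambda>b n J c u' g. (gstep Cc S n (Dp n c b J u') c ^^ Kl) (\<lambda>_. False) g) b n J c (take sw y) (drop sw y))"
        by simp
    qed
  qed
  show ?thesis
  proof (rule fodef_cong[OF G])
    fix n J c and x :: "nat list" assume h: "Vd n J c" "0 < n" "length x = wc + sw" "set x \<subseteq> {..<n}"
    have u: "drop wc x \<in> tuples n sw" using h(3,4) set_drop_subset[of wc x] by (auto simp: tuples_def)
    have g: "take wc x \<in> tuples n wc" using h(3,4) set_take_subset[of wc x] by (auto simp: tuples_def)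
    have x: "x = take wc x @ drop wc x" by simp
    show "((\<exists>u'. length u' = sw \<and> set u' \<subseteq> {..<n} \<and> drop wc x @ u' \<in> J (Inr (to_nat (ACons a))) \<and>
       (\<lambda>b n J c u' g. (gstep Cc S n (DBof J u') c ^^ Kl) (Pv J u') g) 0 n J c u' (take wc x)) \<or>
    (\<exists>b\<in>{..<m}. \<exists>u'. length u' = sw \<and> set u' \<subseteq> {..<n} \<and> drop wc x @ u' \<in> J (Inr (to_nat (ASN a b))) \<and>
       (\<lambda>b n J c u' g. (gstep Cc S n (Dp n c b J u') c ^^ Kl) (\<lambda>_. False) g) b n J c u' (take wc x))) =
      Tgt a AVal n J c x"
    proof -
      have e: "Tgt a AVal n J c x = (take wc x @ drop wc x \<in> Ax n c (apply_rq S n (\<lambda>R. J (Inl R)) c (dl ! a) []) AVal)"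
        unfolding Tgt_def by simp
      show ?thesis unfolding e AVal_sem[OF h(1,2) a u g] by (simp add: tuples_def Bex_def lessThan_iff)
    qed
  qed
qed

end

context dyn begin

lemma Wd_nil: "[] \<in> Wd n" by (simp add: Wd_def)

lemma Tgt_AQ:
  assumes a: "a < m"
  shows "FD kq (Tgt a AQ)"
proof -
  define N where "N = kq + Suc sw"
  define f where "f i = (if i < kq then i else if i < wc then kq else kq + 1 + (i - wc))" for i
  have TV: "FD N (\<lambda>n J c z. Tgt a AVal n J c (map (\<lambda>i. z ! f i) [0..<wc + sw]))"
    by (rule fodef_reindex[OF Tgt_AVal[OF a]]) (auto simp: f_def N_def)
  have E: "FD N (\<lambda>n J c z. map (\<lambda>i. z ! i) [Suc kq..<Suc kq + sw] \<in> J (Inr (to_nat AEmp)))"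
    by (rule atomA) (auto simp: aar_def N_def)
  have MZ0: "FD (Suc N) (\<lambda>n J c y. y ! kq \<le> y ! N)" by (rule fodef_lev) (auto simp: N_def)
  have MZ: "FD N (\<lambda>n J c z. \<forall>b<n. z ! kq \<le> b)"
  proof (rule fodef_cong[OF fodef_all[OF MZ0]])
    fix n J c and z :: "nat list" assume h: "length z = N"
    show "(\<forall>b<n. (z @ [b]) ! kq \<le> (z @ [b]) ! N) = (\<forall>b<n. z ! kq \<le> b)"
      using h by (simp add: nth_append N_def)
  qed
  have ALL: "FD kq (\<lambda>n J c x. \<exists>zz. length zz = Suc sw \<and> set zz \<subseteq> {..<n} \<and>
      ((\<forall>b<n. (x @ zz) ! kq \<le> b) \<and> map (\<lambda>i. (x @ zz) ! i) [Suc kq..<Suc kq + sw] \<in> J (Inr (to_nat AEmp)) \<and>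
       Tgt a AVal n J c (map (\<lambda>i. (x @ zz) ! f i) [0..<wc + sw])))"
    by (rule fodef_exs) (use fodef_and[OF MZ fodef_and[OF E TV]] in \<open>simp only: N_def\<close>)
  show ?thesis
  proof (rule fodef_cong[OF ALL])
    fix n J c and x :: "nat list" assume h: "Vd n J c" "0 < n" "length x = kq" "set x \<subseteq> {..<n}"
    define I where "I = (\<lambda>R. J (Inl R))"
    define I' where "I' = apply_rq S n I c (dl ! a) []"
    have dbI: "is_db S n I c" using Vd_db[OF h(1)] by (simp add: I_def)
    have dbI': "is_db S n I' c" unfolding I'_def by (rule rq_db[OF conjunct1[OF rqok_b[OF a]] dbI])
    have xt: "x \<in> tuples n kq" using h by (simp add: tuples_def)
    define g0 where "g0 = x @ replicate (wc - kq) 0"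
    have g0t: "g0 \<in> tuples n wc" using h kq_le by (auto simp: tuples_def g0_def)
    have emp: "J (Inr (to_nat AEmp)) = {enc n []}"
      using VdJ[OF h(1), of AEmp] by (simp add: aar_def Ax_simps(3))
    have encl: "length (enc n []) = sw" by (rule enc_len[OF h(2) Wd_nil])
    have enct: "enc n [] \<in> tuples n sw" by (rule enc_tuples[OF h(2) Wd_nil])
    have R: "Tgt a AQ n J c x \<longleftrightarrow> Tgt a AVal n J c (g0 @ enc n [])"
    proof -
      have "Tgt a AQ n J c x \<longleftrightarrow> x \<in> q n I' c" by (simp add: Tgt_def Ax_simps(1) I'_def I_def)
      also have "\<dots> \<longleftrightarrow> Gi n c I' (Kl * (Ln n + 1)) g0" unfolding g0_def by (rule q_mem[OF h(2) dbI' xt])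
      also have "\<dots> \<longleftrightarrow> g0 @ enc n [] \<in> Ax n c I' AVal"
      proof -
        have "g0 @ enc n [] \<in> Ax n c I' AVal \<longleftrightarrow> (\<exists>v\<in>Wd n. enc n [] = enc n v \<and> g0 \<in> tuples n wc \<and>
            Gi n c (FW n c v I') (Kl * (Ln n - length v + 1)) g0)"
          by (rule AVal_mem[OF h(2) encl])
        also have "\<dots> \<longleftrightarrow> Gi n c I' (Kl * (Ln n + 1)) g0"
        proof
          assume "\<exists>v\<in>Wd n. enc n [] = enc n v \<and> g0 \<in> tuples n wc \<and> Gi n c (FW n c v I') (Kl * (Ln n - length v + 1)) g0"
          then obtain v where v: "v \<in> Wd n" "enc n [] = enc n v" "Gi n c (FW n c v I') (Kl * (Ln n - length v + 1)) g0" by blast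
          then have "v = []" using enc_inj[OF h(2) Wd_nil v(1)] by simp
          then show "Gi n c I' (Kl * (Ln n + 1)) g0" using v by (simp add: FW_def)
        next
          assume "Gi n c I' (Kl * (Ln n + 1)) g0"
          then show "\<exists>v\<in>Wd n. enc n [] = enc n v \<and> g0 \<in> tuples n wc \<and> Gi n c (FW n c v I') (Kl * (Ln n - length v + 1)) g0"
            using Wd_nil g0t by (intro bexI[of _ "[]"]) (auto simp: FW_def)
        qed
        finally show ?thesis by simp
      qed
      also have "\<dots> \<longleftrightarrow> Tgt a AVal n J c (g0 @ enc n [])" by (simp add: Tgt_def I'_def I_def)
      finally show ?thesis .
    qed
    have mp: "\<And>z0 u. length u = sw \<Longrightarrow> map (\<lambda>i. (x @ z0 # u) ! f i) [0..<wc + sw] = x @ replicate (wc - kq) z0 @ u"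
      by (rule nth_equalityI) (use h(3) kq_le in \<open>auto simp: f_def nth_append nth_Cons'\<close>)
    have mu: "\<And>z0 u. length u = sw \<Longrightarrow> map (\<lambda>i. (x @ z0 # u) ! i) [Suc kq..<Suc kq + sw] = u"
      by (rule nth_equalityI) (use h(3) in \<open>auto simp: nth_append intro!: arg_cong[where f="(!) _"]\<close>)
    have mk: "\<And>z0 u. (x @ z0 # u) ! kq = z0" using h(3) by (simp add: nth_append)
    show "(\<exists>zz. length zz = Suc sw \<and> set zz \<subseteq> {..<n} \<and>
      ((\<forall>b<n. (x @ zz) ! kq \<le> b) \<and> map (\<lambda>i. (x @ zz) ! i) [Suc kq..<Suc kq + sw] \<in> J (Inr (to_nat AEmp)) \<and>
       Tgt a AVal n J c (map (\<lambda>i. (x @ zz) ! f i) [0..<wc + sw]))) = Tgt a AQ n J c x"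
    proof
      assume "\<exists>zz. length zz = Suc sw \<and> set zz \<subseteq> {..<n} \<and>
      ((\<forall>b<n. (x @ zz) ! kq \<le> b) \<and> map (\<lambda>i. (x @ zz) ! i) [Suc kq..<Suc kq + sw] \<in> J (Inr (to_nat AEmp)) \<and>
       Tgt a AVal n J c (map (\<lambda>i. (x @ zz) ! f i) [0..<wc + sw]))"
      then obtain zz where zz: "length zz = Suc sw" "(\<forall>b<n. (x @ zz) ! kq \<le> b)"
        "map (\<lambda>i. (x @ zz) ! i) [Suc kq..<Suc kq + sw] \<in> J (Inr (to_nat AEmp))"
        "Tgt a AVal n J c (map (\<lambda>i. (x @ zz) ! f i) [0..<wc + sw])" by blast
      then obtain z0 u where zu: "zz = z0 # u" "length u = sw" by (cases zz) auto
      have "z0 = 0" using zz(2) h(2) unfolding zu mk by auto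
      moreover have "u = enc n []" using zz(3) emp unfolding zu mu[OF zu(2)] by simp
      ultimately show "Tgt a AQ n J c x" using zz(4) R unfolding zu mp[OF zu(2)] g0_def by simp
    next
      assume "Tgt a AQ n J c x"
      then have T: "Tgt a AVal n J c (g0 @ enc n [])" using R by simp
      show "\<exists>zz. length zz = Suc sw \<and> set zz \<subseteq> {..<n} \<and>
      ((\<forall>b<n. (x @ zz) ! kq \<le> b) \<and> map (\<lambda>i. (x @ zz) ! i) [Suc kq..<Suc kq + sw] \<in> J (Inr (to_nat AEmp)) \<and>
       Tgt a AVal n J c (map (\<lambda>i. (x @ zz) ! f i) [0..<wc + sw]))"
      proof (intro exI[of _ "0 # enc n []"] conjI)
        show "length (0 # enc n []) = Suc sw" using encl by simp
        show "set (0 # enc n []) \<subseteq> {..<n}" using enct h(2) by (auto simp: tuples_def)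
        show "\<forall>b<n. (x @ 0 # enc n []) ! kq \<le> b" unfolding mk by simp
        show "map (\<lambda>i. (x @ 0 # enc n []) ! i) [Suc kq..<Suc kq + sw] \<in> J (Inr (to_nat AEmp))"
          unfolding mu[OF encl] emp by simp
        show "Tgt a AVal n J c (map (\<lambda>i. (x @ 0 # enc n []) ! f i) [0..<wc + sw])"
          unfolding mp[OF encl] using T by (simp add: g0_def)
      qed
    qed
  qed
qed

end

context dyn begin

lemma Tgt_all:
  assumes a: "a < m" and r: "aar X = Some r"
  shows "FD r (Tgt a X)"
proof (cases X)
  case AQ then show ?thesis using r Tgt_AQ[OF a] by (simp add: aar_def)
next
  case ABit then show ?thesis using r by (intro Tgt_static) auto
next
  case AEmp then show ?thesis using r by (intro Tgt_static) auto
next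
  case (ACons b) then show ?thesis using r by (intro Tgt_static) auto
next
  case (ASN b b')
  have "X \<in> range (\<lambda>(a, b). ASN a b)" using ASN by (auto intro: range_eqI[of _ _ "(b, b')"])
  then show ?thesis using r by (intro Tgt_static) auto
next
  case (ADB R)
  then obtain r0 where r0: "srel S R = Some r0" "r = r0 + sw" using r by (auto simp: aar_def)
  show ?thesis using Tgt_ADB[OF a r0(1)] ADB r0(2) by simp
next
  case AVal then show ?thesis using r Tgt_AVal[OF a] by (simp add: aar_def)
qed

lemma Ax_tuples:
  assumes n: "0 < n" and db: "is_db S n I c" and r: "aar X = Some r"
  shows "Ax n c I X \<subseteq> tuples n r"
proof (cases X)
  case AQ then show ?thesis using r qrep[OF n db] by (auto simp: aar_def Ax_simps)
next
  case ABit then show ?thesis using r by (auto simp: aar_def Ax_simps tuples_def)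
next
  case AEmp then show ?thesis using r enc_tuples[OF n Wd_nil] by (auto simp: aar_def Ax_simps)
next
  case (ACons b)
  then have b: "b < m" "r = sw + sw" using r by (auto simp: aar_def split: if_splits)
  show ?thesis unfolding ACons Ax_simps(4)[OF b(1)] b(2)
    using enc_tuples[OF n] Wd_Cons[OF b(1)] by (auto intro!: tuples_append)
next
  case (ASN b b')
  then have b: "b < m" "b' < m" "r = sw + sw" using r by (auto simp: aar_def split: if_splits)
  show ?thesis unfolding ASN Ax_simps(5)[OF b(1,2)] b(3)
  proof
    fix x assume "x \<in> {enc n v @ enc n (butlast (b # v)) | v. v \<in> Wd n \<and> length v = Ln n \<and> last (b # v) = b'}"
    then obtain v where v: "x = enc n v @ enc n (butlast (b # v))" "v \<in> Wd n" by blast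
    have "enc n (butlast (b # v)) \<in> tuples n sw" by (rule enc_tuples[OF n Wd_butlast[OF b(1) v(2)]])
    then show "x \<in> tuples n (sw + sw)" unfolding v(1) by (intro tuples_append enc_tuples[OF n v(2)])
  qed
next
  case (ADB R)
  then obtain r0 where r0: "srel S R = Some r0" "r = r0 + sw" using r by (auto simp: aar_def)
  have "FW n c v I R \<subseteq> tuples n r0" if "v \<in> Wd n" for v
    using FW_db[OF db Wd_letters[OF that]] r0(1) unfolding is_db_def by (metis option.simps(5))
  note FWt = this
  have sr: "srel S R \<noteq> None" using r0(1) by simp
  show ?thesis unfolding ADB Ax_simps(6)[OF sr] r0(2)
  proof
    fix x assume "x \<in> {t @ enc n v | t v. v \<in> Wd n \<and> t \<in> FW n c v I R}"
    then obtain t v where v: "x = t @ enc n v" "v \<in> Wd n" "t \<in> FW n c v I R" by blast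
    show "x \<in> tuples n (r0 + sw)" unfolding v(1)
      by (intro tuples_append enc_tuples[OF n v(2)] subsetD[OF FWt[OF v(2)] v(3)])
  qed
next
  case AVal
  then have rr: "r = wc + sw" using r by (simp add: aar_def)
  show ?thesis unfolding AVal Ax_simps(7) rr using enc_tuples[OF n] by (auto intro!: tuples_append)
qed

definition idx :: "rq \<Rightarrow> nat" where "idx \<rho> = (SOME a. a < m \<and> dl ! a = \<rho>)"

lemma idx: "\<rho> \<in> \<Delta> \<Longrightarrow> idx \<rho> < m \<and> dl ! idx \<rho> = \<rho>"
proof -
  assume "\<rho> \<in> \<Delta>"
  then have "\<rho> \<in> set dl" using dl by simp
  then obtain i where i: "i < m" "dl ! i = \<rho>" by (auto simp: in_set_conv_nth)
  show "idx \<rho> < m \<and> dl ! idx \<rho> = \<rho>" unfolding idx_def by (rule someI[of _ i]) (use i in simp)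
qed

definition good :: "rq \<Rightarrow> nat \<Rightarrow> nat \<Rightarrow> (nat + nat) fo \<Rightarrow> bool" where
  "good \<rho> T r \<phi> \<longleftrightarrow> fo_wf arA (scst S) False \<phi> \<and> fvs \<phi> \<subseteq> {..<r} \<and>
     (\<forall>n J c x. Vd n J c \<longrightarrow> 0 < n \<longrightarrow> (\<forall>k\<in>scst S. c k < n) \<longrightarrow> length x = r \<longrightarrow> set x \<subseteq> {..<n} \<longrightarrow>
        sat n J c (\<lambda>i. x ! i) \<phi> = Tgt (idx \<rho>) (from_nat T) n J c x)"

definition updf :: "rq \<Rightarrow> nat \<Rightarrow> (nat + nat) fo" where
  "updf \<rho> T = (SOME \<phi>. good \<rho> T (the (axr T)) \<phi>)"

lemma updf_good:
  assumes \<rho>: "\<rho> \<in> \<Delta>" and T: "axr T = Some r"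
  shows "good \<rho> T r (updf \<rho> T)"
proof -
  have Tr: "T \<in> range (to_nat :: asym \<Rightarrow> nat)" using T by (simp add: axr_def split: if_splits)
  then obtain X :: asym where X: "T = to_nat X" by blast
  have aX: "aar X = Some r" using T X by simp
  have "FD r (Tgt (idx \<rho>) X)" by (rule Tgt_all[OF conjunct1[OF idx[OF \<rho>]] aX])
  then have "\<exists>\<phi>. good \<rho> T r \<phi>" unfolding fodef_def good_def X by simp
  then show ?thesis unfolding updf_def using T by (simp add: someI_ex)
qed

definition "Prog = \<lparr>auxar = axr, upd = updf, qsym = to_nat AQ\<rparr>"

definition init :: "nat \<Rightarrow> (nat \<Rightarrow> nat) \<Rightarrow> nat \<Rightarrow> nat list set" where
  "init n c T = (if T \<in> range (to_nat :: asym \<Rightarrow> nat) then Ax n c (\<lambda>_. {}) (from_nat T) else {})"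

lemma fin_dom_aar: "finite {X. aar X \<noteq> None}"
proof -
  have "{X. aar X \<noteq> None} \<subseteq> {AQ, ABit, AEmp, AVal} \<union> ACons ` {..<m} \<union> (\<lambda>(a, b). ASN a b) ` ({..<m} \<times> {..<m})
        \<union> ADB ` dom (srel S)"
  proof
    fix X assume "X \<in> {X. aar X \<noteq> None}"
    then show "X \<in> {AQ, ABit, AEmp, AVal} \<union> ACons ` {..<m} \<union> (\<lambda>(a, b). ASN a b) ` ({..<m} \<times> {..<m}) \<union> ADB ` dom (srel S)"
      by (cases X) (auto simp: aar_def split: if_splits)
  qed
  moreover have "finite ({AQ, ABit, AEmp, AVal} \<union> ACons ` {..<m} \<union> (\<lambda>(a, b). ASN a b) ` ({..<m} \<times> {..<m})
        \<union> ADB ` dom (srel S))" using fin_srel by simp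
  ultimately show ?thesis by (rule finite_subset)
qed

lemma prog_ok: "prog_ok S kq \<Delta> Prog"
proof -
  have "dom axr \<subseteq> to_nat ` {X. aar X \<noteq> None}"
    by (auto simp: axr_def split: if_splits)
  then have "finite (dom axr)" using fin_dom_aar finite_subset by blast
  moreover have "\<forall>\<rho>\<in>\<Delta>. \<forall>T r. axr T = Some r \<longrightarrow>
        fo_wf (case_sum (srel S) axr) (scst S) False (updf \<rho> T) \<and> fvs (updf \<rho> T) \<subseteq> {..< rpar \<rho> + r}"
    using updf_good rqok unfolding good_def by auto
  ultimately show ?thesis unfolding prog_ok_def Prog_def by (simp add: aar_def)
qed

lemma Vd_init:
  assumes "\<forall>j\<in>scst S. c j < n"
  shows "Vd n (case_sum (\<lambda>_. {}) (init n c)) c"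
  using assms unfolding Vd_def is_db_def init_def by (auto split: option.splits)

lemma Vd_step:
  assumes V: "Vd n (case_sum I A) c" and n: "0 < n" and \<rho>: "\<rho> \<in> \<Delta>" and a: "a \<in> tuples n (rpar \<rho>)"
    and cs: "\<forall>j\<in>scst S. c j < n"
  shows "Vd n (case_sum (fst (step S Prog n c (\<rho>, a) (I, A))) (snd (step S Prog n c (\<rho>, a) (I, A)))) c"
proof -
  have a0: "a = []" using a rqok[OF \<rho>] by (simp add: tuples_def)
  define I' where "I' = apply_rq S n I c \<rho> []"
  have dbI: "is_db S n I c" using Vd_db[OF V] by simp
  have dbI': "is_db S n I' c" unfolding I'_def using rq_db rqok[OF \<rho>] dbI by blast
  have id: "idx \<rho> < m" "dl ! idx \<rho> = \<rho>" using idx[OF \<rho>] by auto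
  have aux: "snd (step S Prog n c (\<rho>, a) (I, A)) (to_nat X) = Ax n c I' X" if X: "aar X = Some r" for X r
  proof -
    have g: "good \<rho> (to_nat X) r (updf \<rho> (to_nat X))" using updf_good[OF \<rho>] X by simp
    have "snd (step S Prog n c (\<rho>, a) (I, A)) (to_nat X) =
          {b \<in> tuples n r. sat n (case_sum I A) c (\<lambda>i. b ! i) (updf \<rho> (to_nat X))}"
      using X by (simp add: step_def Prog_def a0)
    also have "\<dots> = {b \<in> tuples n r. b \<in> Ax n c I' X}"
      using g V n cs unfolding good_def Tgt_def I'_def by (auto simp: tuples_def id)
    also have "\<dots> = Ax n c I' X" using Ax_tuples[OF n dbI' X] by blast
    finally show ?thesis .
  qed
  have fst: "fst (step S Prog n c (\<rho>, a) (I, A)) = I'" by (simp add: step_def I'_def a0)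
  show ?thesis unfolding Vd_def using dbI' aux by (auto simp: fst)
qed

lemma Vd_fold:
  assumes "Vd n (case_sum I A) c" "0 < n" "\<forall>j\<in>scst S. c j < n"
    "\<forall>(\<rho>, a)\<in>set \<alpha>. \<rho> \<in> \<Delta> \<and> a \<in> tuples n (rpar \<rho>)"
  shows "Vd n (case_sum (fst (fold (step S Prog n c) \<alpha> (I, A))) (snd (fold (step S Prog n c) \<alpha> (I, A)))) c"
  using assms
proof (induction \<alpha> arbitrary: I A)
  case Nil then show ?case by simp
next
  case (Cons ch \<alpha>)
  obtain \<rho> a where ch: "ch = (\<rho>, a)" by (cases ch)
  obtain I' A' where st: "step S Prog n c (\<rho>, a) (I, A) = (I', A')" by (cases "step S Prog n c (\<rho>, a) (I, A)")
  have "Vd n (case_sum I' A') c" using Vd_step[OF Cons.prems(1,2), of \<rho> a] Cons.prems(3,4) ch st by simp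
  then have "Vd n (case_sum (fst (fold (step S Prog n c) \<alpha> (I', A'))) (snd (fold (step S Prog n c) \<alpha> (I', A')))) c"
    using Cons.IH[of I' A'] Cons.prems ch by simp
  moreover have "fold (step S Prog n c) (ch # \<alpha>) (I, A) = fold (step S Prog n c) \<alpha> (I', A')" using ch st by simp
  ultimately show ?case by (simp only:)
qed

lemma main: "dynfo_init S kq q \<Delta>"
  unfolding dynfo_init_def
proof (intro exI[of _ Prog] exI[of _ init] conjI prog_ok allI impI)
  fix n c \<alpha> assume n: "0 < n" and cs: "\<forall>j\<in>scst S. c j < n" and "\<alpha> \<noteq> []"
    and al: "\<forall>(\<rho>, a)\<in>set \<alpha>. \<rho> \<in> \<Delta> \<and> a \<in> tuples n (rpar \<rho>)"
  define st where "st = fold (step S Prog n c) \<alpha> ((\<lambda>_. {}), init n c)"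
  have V: "Vd n (case_sum (fst st) (snd st)) c"
    unfolding st_def by (rule Vd_fold[OF Vd_init[OF cs] n cs al])
  have "snd st (to_nat AQ) = Ax n c (fst st) AQ" using VdJ[OF V, of AQ] by (simp add: aar_def)
  then show "let st = fold (step S Prog n c) \<alpha> ((\<lambda>_. {}), init n c) in snd st (qsym Prog) = q n (fst st) c"
    unfolding st_def[symmetric] Let_def by (simp add: Prog_def Ax_simps(1))
qed

end

theorem theorem5p1:
  fixes S :: schema and k :: nat
    and q :: "nat \<Rightarrow> (nat \<Rightarrow> nat list set) \<Rightarrow> (nat \<Rightarrow> nat) \<Rightarrow> nat list set"
    and \<Delta> :: "rq set"
  assumes "schema_ok S"
    and "AC1_query S k q"
    and "finite \<Delta>"
    and "\<forall>\<rho>\<in>\<Delta>. rq_ok S \<rho> \<and> rpar \<rho> = 0"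
  shows "dynfo_init S k q \<Delta>"
proof -
  obtain Cc where Cc: "circ_ok S k Cc" "\<forall>n>0. \<forall>I c. is_db S n I c \<longrightarrow>
        q n I c = {a \<in> tuples n k. gval Cc S n I c (dbound Cc n) (a @ replicate (cw Cc - k) 0)}"
    using assms(2) unfolding AC1_query_def by blast
  obtain dl where dl: "set dl = \<Delta>" using finite_list[OF assms(3)] by blast
  interpret dyn S k q \<Delta> Cc dl
  proof
    show "schema_ok S" by (fact assms(1))
    show "circ_ok S k Cc" by (fact Cc(1))
    show "\<And>n I c. 0 < n \<Longrightarrow> is_db S n I c \<Longrightarrow>
        q n I c = {a \<in> tuples n k. gval Cc S n I c (dbound Cc n) (a @ replicate (cw Cc - k) 0)}"
      using Cc(2) by blast
    show "set dl = \<Delta>" by (fact dl)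
    show "\<And>\<rho>. \<rho> \<in> \<Delta> \<Longrightarrow> rq_ok S \<rho> \<and> rpar \<rho> = 0" using assms(4) by blast
  qed
  show ?thesis by (rule main)
qed


end
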